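(* For every finite simplicial graph $\Delta$ and every $m\in\mathbb{N}$, $m\ge1$, the partially commutative group $\mathbb{G}(\Delta)$ and the partially commutative group $\mathbb{G}(\Delta_m)$ of its $m$-inflation are universally equivalent.
   Context: $\mathbb{G}(\Gamma)=\langle V(\Gamma)\mid [x,y]=1 \text{ for } (x,y)\in E(\Gamma)\rangle$. The $m$-inflation $\Delta_m$ of $\Delta$ has vertices $v_1,\dots,v_m$ for each $v\in V(\Delta)$; $v_i,v_j$ are adjacent for $i\ne j$, and $v_i,w_k$ ($v\ne w$) are adjacent iff $(v,w)\in E(\Delta)$. Thus $\mathbb{G}(\Delta_m)$ is the graph product over $\Delta$ with vertex groups $\mathbb{Z}^m$. Two groups are universally equivalent if they satisfy the same universal first-order sentences in the language of groups. *)

theory Defs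
  imports "HOL-Algebra.Group"
begin

text \<open>Words are lists of letters (x, e), where x is a vertex and e = True means
x, e = False means x^{-1}.\<close>

definition gg_words :: "'v set \<Rightarrow> ('v \<times> bool) list set" where
  "gg_words V = {w. set (map fst w) \<subseteq> V}"

definition gg_step :: "'v set \<Rightarrow> ('v \<times> 'v) set \<Rightarrow>
    (('v \<times> bool) list \<times> ('v \<times> bool) list) set" where
  "gg_step V E =
     {(a @ [(x, e), (x, \<not> e)] @ b, a @ b) | a b x e.
        a \<in> gg_words V \<and> b \<in> gg_words V \<and> x \<in> V}
   \<union> {(a @ [(x, e), (y, d)] @ b, a @ [(y, d), (x, e)] @ b) | a b x e y d.
        a \<in> gg_words V \<and> b \<in> gg_words V \<and> (x, y) \<in> E}"

text \<open>The congruence on words defining the presentation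
 \<langle>V | [x,y] = 1 for (x,y) \<in> E\<rangle>.\<close>
definition gg_rel :: "'v set \<Rightarrow> ('v \<times> 'v) set \<Rightarrow>
    (('v \<times> bool) list \<times> ('v \<times> bool) list) set" where
  "gg_rel V E = Restr ((gg_step V E \<union> (gg_step V E)\<inverse>)\<^sup>*) (gg_words V)"

definition graph_group :: "'v set \<Rightarrow> ('v \<times> 'v) set \<Rightarrow> ('v \<times> bool) list set monoid" where
  "graph_group V E =
     \<lparr> carrier = gg_words V // gg_rel V E,
       mult = (\<lambda>X Y. \<Union>{gg_rel V E `` {x @ y} | x y. x \<in> X \<and> y \<in> Y}),
       one = gg_rel V E `` {[]} \<rparr>"

definition infl_vertices :: "'v set \<Rightarrow> nat \<Rightarrow> ('v \<times> nat) set" where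
  "infl_vertices V m = V \<times> {1..m}"

definition infl_edges :: "'v set \<Rightarrow> ('v \<times> 'v) set \<Rightarrow> nat \<Rightarrow> (('v \<times> nat) \<times> ('v \<times> nat)) set" where
  "infl_edges V E m =
     {((v, i), (v, j)) | v i j. v \<in> V \<and> i \<in> {1..m} \<and> j \<in> {1..m} \<and> i \<noteq> j}
   \<union> {((v, i), (w, k)) | v w i k. (v, w) \<in> E \<and> v \<noteq> w \<and> i \<in> {1..m} \<and> k \<in> {1..m}}"

datatype gterm = GVar nat | GOne | GMul gterm gterm | GInv gterm

text \<open>Quantifier-free formulas; a universal sentence is the universal closure
\<forall>x_1 ... x_n. \<phi> of a quantifier-free formula \<phi>.\<close>
datatype qf_form = FEq gterm gterm | FFalse | FNot qf_form
  | FAnd qf_form qf_form | FOr qf_form qf_form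

fun geval :: "('a, 'b) monoid_scheme \<Rightarrow> (nat \<Rightarrow> 'a) \<Rightarrow> gterm \<Rightarrow> 'a" where
  "geval G s (GVar n) = s n"
| "geval G s GOne = \<one>\<^bsub>G\<^esub>"
| "geval G s (GMul t u) = geval G s t \<otimes>\<^bsub>G\<^esub> geval G s u"
| "geval G s (GInv t) = inv\<^bsub>G\<^esub> (geval G s t)"

fun fsat :: "('a, 'b) monoid_scheme \<Rightarrow> (nat \<Rightarrow> 'a) \<Rightarrow> qf_form \<Rightarrow> bool" where
  "fsat G s (FEq t u) = (geval G s t = geval G s u)"
| "fsat G s FFalse = False"
| "fsat G s (FNot f) = (\<not> fsat G s f)"
| "fsat G s (FAnd f g) = (fsat G s f \<and> fsat G s g)"
| "fsat G s (FOr f g) = (fsat G s f \<or> fsat G s g)"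

definition sat_universal :: "('a, 'b) monoid_scheme \<Rightarrow> qf_form \<Rightarrow> bool" where
  "sat_universal G \<phi> = (\<forall>s. (\<forall>n. s n \<in> carrier G) \<longrightarrow> fsat G s \<phi>)"

definition universally_equivalent ::
    "('a, 'b) monoid_scheme \<Rightarrow> ('c, 'd) monoid_scheme \<Rightarrow> bool" where
  "universally_equivalent G H = (\<forall>\<phi>. sat_universal G \<phi> \<longleftrightarrow> sat_universal H \<phi>)"

end

theory Submission
  imports Defs
begin


fun linv :: "'a \<times> bool \<Rightarrow> 'a \<times> bool" where "linv (x, e) = (x, \<not> e)"

lemma linv_linv[simp]: "linv (linv a) = a" by (cases a) auto
lemma fst_linv[simp]: "fst (linv a) = fst a" by (cases a) auto
lemma linv_neq[simp]: "linv a \<noteq> a" "a \<noteq> linv a" by (cases a, auto)+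

definition cstep :: "('a \<times> 'a) set \<Rightarrow> (('a \<times> bool) list \<times> ('a \<times> bool) list) set" where
  "cstep E = {(u, v). \<exists>p q x y. u = p @ [x, y] @ q \<and> v = p @ [y, x] @ q \<and> (fst x, fst y) \<in> E}"

abbreviation ceq :: "('a \<times> 'a) set \<Rightarrow> (('a \<times> bool) list \<times> ('a \<times> bool) list) set" where
  "ceq E \<equiv> (cstep E)\<^sup>*"

lemma cstep_sym: "sym E \<Longrightarrow> sym (cstep E)"
  unfolding cstep_def sym_def by blast

lemma ceq_sym: "sym E \<Longrightarrow> (u, v) \<in> ceq E \<Longrightarrow> (v, u) \<in> ceq E"
  using sym_rtrancl[OF cstep_sym[of E]] unfolding sym_def by blast

lemma ceq_trans: "(u, v) \<in> ceq E \<Longrightarrow> (v, w) \<in> ceq E \<Longrightarrow> (u, w) \<in> ceq E"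
  by (rule rtrancl_trans)

lemma cstep_cong: "(u, v) \<in> cstep E \<Longrightarrow> (p @ u @ q, p @ v @ q) \<in> cstep E"
proof -
  assume "(u, v) \<in> cstep E"
  then obtain a b x y where "u = a @ [x, y] @ b" "v = a @ [y, x] @ b" "(fst x, fst y) \<in> E"
    unfolding cstep_def by blast
  then show ?thesis unfolding cstep_def
    apply (simp only: mem_Collect_eq case_prod_conv)
    apply (rule exI[of _ "p @ a"], rule exI[of _ "b @ q"], rule exI[of _ x], rule exI[of _ y])
    by simp
qed

lemma ceq_cong: "(u, v) \<in> ceq E \<Longrightarrow> (p @ u @ q, p @ v @ q) \<in> ceq E"
proof (induction rule: rtrancl_induct)
  case base then show ?case by simp
next
  case (step y z) then show ?case by (meson cstep_cong rtrancl.rtrancl_into_rtrancl)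
qed

lemma ceq_cons: "(u, v) \<in> ceq E \<Longrightarrow> (a # u, a # v) \<in> ceq E"
  using ceq_cong[of u v E "[a]" "[]"] by simp

lemma ceq_app2: "(u, v) \<in> ceq E \<Longrightarrow> (u @ q, v @ q) \<in> ceq E"
  using ceq_cong[of u v E "[]" q] by simp

lemma ceq_app1: "(u, v) \<in> ceq E \<Longrightarrow> (p @ u, p @ v) \<in> ceq E"
  using ceq_cong[of u v E p "[]"] by simp

lemma ceq_swap: "(fst x, fst y) \<in> E \<Longrightarrow> (x # y # t, y # x # t) \<in> ceq E"
  unfolding cstep_def
  apply (rule r_into_rtrancl)
  apply (simp only: mem_Collect_eq case_prod_conv)
  apply (rule exI[of _ "[]"], rule exI[of _ t], rule exI[of _ x], rule exI[of _ y])
  by simp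

lemma ceq_length: "(u, v) \<in> ceq E \<Longrightarrow> length u = length v"
  by (induction rule: rtrancl_induct) (auto simp: cstep_def)

lemma ceq_Nil: "(u, []) \<in> ceq E \<Longrightarrow> u = []"
  using ceq_length by fastforce

definition levi_concl where
  "levi_concl E c u d v \<longleftrightarrow> (c = d \<and> (u, v) \<in> ceq E) \<or>
     ((fst c, fst d) \<in> E \<and> (\<exists>t. (u, d # t) \<in> ceq E \<and> (v, c # t) \<in> ceq E))"

lemma levi_aux:
  assumes symE: "sym E" and irr: "\<forall>v. (v, v) \<notin> E"
  shows "\<forall>c w. (c # u, w) \<in> ceq E \<longrightarrow> (\<forall>d v. w = d # v \<longrightarrow> levi_concl E c u d v)"
proof (induction "length u" arbitrary: u rule: less_induct)
  case less
  show ?case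
  proof (rule allI, rule allI, rule impI)
    fix c w0 assume "(c # u, w0) \<in> ceq E"
    then show "\<forall>d v. w0 = d # v \<longrightarrow> levi_concl E c u d v"
    proof (induction w0 rule: rtrancl_induct)
      case base then show ?case by (auto simp: levi_concl_def)
    next
      case (step w w'')
      from step.hyps(2) obtain p x y q where w: "w = p @ [x, y] @ q"
        and w'': "w'' = p @ [y, x] @ q" and xy: "(fst x, fst y) \<in> E"
        unfolding cstep_def by blast
      show ?case
      proof (cases p)
        case Nil
        have Q: "levi_concl E c u x (y # q)" using step.IH w Nil by simp
        show ?thesis
        proof (intro allI impI)
          fix d v assume "w'' = d # v"
          then have dv: "d = y" "v = x # q" using w'' Nil by auto
          from Q[unfolded levi_concl_def] show "levi_concl E c u d v"
          proof (elim disjE conjE exE)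
            assume "c = x" "(u, y # q) \<in> ceq E"
            then show ?thesis using dv xy by (auto simp: levi_concl_def)
          next
            fix t assume cx: "(fst c, fst x) \<in> E" and ut: "(u, x # t) \<in> ceq E"
              and yq: "(y # q, c # t) \<in> ceq E"
            have lt: "length t < length u" using ceq_length[OF ut] by simp
            have "levi_concl E c t y q"
              by (rule less[OF lt, rule_format, OF ceq_sym[OF symE yq] refl])
            from this[unfolded levi_concl_def] show ?thesis
            proof (elim disjE conjE exE)
              assume "c = y" "(t, q) \<in> ceq E"
              then show ?thesis using dv ut unfolding levi_concl_def
                by (auto intro: ceq_trans ceq_cons)
            next
              fix t' assume cy: "(fst c, fst y) \<in> E" and tt: "(t, y # t') \<in> ceq E"
                and qq: "(q, c # t') \<in> ceq E"
              have 1: "(u, y # x # t') \<in> ceq E"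
                by (rule ceq_trans[OF ceq_trans[OF ut ceq_cons[OF tt]] ceq_swap[OF xy]])
              have cx': "(fst x, fst c) \<in> E" using cx symE by (auto simp: sym_def)
              have 2: "(v, c # x # t') \<in> ceq E"
                unfolding dv by (rule ceq_trans[OF ceq_cons[OF qq] ceq_swap[OF cx']])
              show ?thesis using 1 2 cy dv unfolding levi_concl_def by blast
            qed
          qed
        qed
      next
        case (Cons z p')
        have Q: "levi_concl E c u z (p' @ [x, y] @ q)" using step.IH w Cons by simp
        have st: "(p' @ [x, y] @ q, p' @ [y, x] @ q) \<in> ceq E"
          using xy unfolding cstep_def by (intro r_into_rtrancl) blast
        show ?thesis
        proof (intro allI impI)
          fix d v assume "w'' = d # v"
          then have dv: "d = z" "v = p' @ [y, x] @ q" using w'' Cons by auto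
          from Q[unfolded levi_concl_def] show "levi_concl E c u d v"
          proof (elim disjE conjE exE)
            assume "c = z" "(u, p' @ [x, y] @ q) \<in> ceq E"
            then show ?thesis using dv ceq_trans[OF _ st] unfolding levi_concl_def by blast
          next
            fix t assume "(fst c, fst z) \<in> E" "(u, z # t) \<in> ceq E" "(p' @ [x, y] @ q, c # t) \<in> ceq E"
            then show ?thesis using dv ceq_trans[OF ceq_sym[OF symE st]] unfolding levi_concl_def by blast
          qed
        qed
      qed
    qed
  qed
qed

lemma levi:
  assumes "sym E" "\<forall>v. (v, v) \<notin> E" "(c # u, d # v) \<in> ceq E"
  shows "(c = d \<and> (u, v) \<in> ceq E) \<or>
     ((fst c, fst d) \<in> E \<and> (\<exists>t. (u, d # t) \<in> ceq E \<and> (v, c # t) \<in> ceq E))"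
  using levi_aux[OF assms(1,2)] assms(3) unfolding levi_concl_def by blast

definition tred :: "('a \<times> 'a) set \<Rightarrow> ('a \<times> bool) list \<Rightarrow> bool" where
  "tred E w \<longleftrightarrow> \<not> (\<exists>u p a q. (w, u) \<in> ceq E \<and> u = p @ a # linv a # q)"

definition act :: "('a \<times> 'a) set \<Rightarrow> 'a \<times> bool \<Rightarrow> ('a \<times> bool) list \<Rightarrow> ('a \<times> bool) list" where
  "act E a w = (if \<exists>t. (w, linv a # t) \<in> ceq E then (SOME t. (w, linv a # t) \<in> ceq E) else a # w)"

context
  fixes E :: "('a \<times> 'a) set"
  assumes symE: "sym E" and irr: "\<forall>v. (v, v) \<notin> E"
begin

lemma symE': "(x, y) \<in> E \<Longrightarrow> (y, x) \<in> E"
  using symE by (auto simp: sym_def)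

lemma ceq_sym': "(u, v) \<in> ceq E \<Longrightarrow> (v, u) \<in> ceq E"
  using ceq_sym[OF symE] .

lemma levi': "(c # u, d # v) \<in> ceq E \<Longrightarrow> (c = d \<and> (u, v) \<in> ceq E) \<or>
     ((fst c, fst d) \<in> E \<and> (\<exists>t. (u, d # t) \<in> ceq E \<and> (v, c # t) \<in> ceq E))"
  using levi[OF symE irr] .

lemma cancel: "(c # u, c # v) \<in> ceq E \<Longrightarrow> (u, v) \<in> ceq E"
  using levi' irr by blast

lemma tred_ceq: "tred E w \<Longrightarrow> (w, w') \<in> ceq E \<Longrightarrow> tred E w'"
  unfolding tred_def using ceq_trans[of w w' E] by blast

lemma tred_tail: "tred E (a # w) \<Longrightarrow> tred E w"
  unfolding tred_def
proof (elim contrapos_nn exE conjE)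
  fix u p b q assume "(w, u) \<in> ceq E" "u = p @ b # linv b # q"
  then show "\<exists>u p a' q. (a # w, u) \<in> ceq E \<and> u = p @ a' # linv a' # q"
    by (intro exI[of _ "a # u"] exI[of _ "a # p"]) (auto intro: ceq_cons)
qed

lemma tred_Nil: "tred E []"
  unfolding tred_def using ceq_sym' ceq_Nil by fastforce

lemma not_tred: "(w, p @ b # linv b # q) \<in> ceq E \<Longrightarrow> \<not> tred E w"
  unfolding tred_def by blast

lemma tred_prep:
  "tred E w \<Longrightarrow> \<not> (\<exists>t. (w, linv a # t) \<in> ceq E) \<Longrightarrow> tred E (a # w)"
proof (induction "length w" arbitrary: w rule: less_induct)
  case less
  show ?case unfolding tred_def
  proof (rule notI, elim exE conjE)
    fix u p b q assume au: "(a # w, u) \<in> ceq E" and u: "u = p @ b # linv b # q"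
    show False
    proof (cases p)
      case Nil
      with au u have 1: "(a # w, b # (linv b # q)) \<in> ceq E" by simp
      from levi'[OF 1] show False
      proof (elim disjE conjE exE)
        assume "a = b" "(w, linv b # q) \<in> ceq E"
        then show False using less.prems(2) by blast
      next
        fix t assume ab: "(fst a, fst b) \<in> E" and wt: "(w, b # t) \<in> ceq E"
          and bq: "(linv b # q, a # t) \<in> ceq E"
        from levi'[OF bq] show False
        proof (elim disjE conjE exE)
          assume "linv b = a" then show False using ab irr by (metis fst_linv)
        next
          fix t' assume "(t, linv b # t') \<in> ceq E"
          then have "(w, [] @ b # linv b # t') \<in> ceq E" using wt by (auto intro: ceq_trans ceq_cons)
          then show False using less.prems(1) not_tred by blast
        qed
      qed
    next
      case (Cons c p')
      with au u have 1: "(a # w, c # (p' @ b # linv b # q)) \<in> ceq E" by simp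
      from levi'[OF 1] show False
      proof (elim disjE conjE exE)
        assume "a = c" "(w, p' @ b # linv b # q) \<in> ceq E"
        then show False using less.prems(1) not_tred by blast
      next
        fix t assume ac: "(fst a, fst c) \<in> E" and wt: "(w, c # t) \<in> ceq E"
          and pt: "(p' @ b # linv b # q, a # t) \<in> ceq E"
        have tr: "tred E t" using tred_tail tred_ceq less.prems(1) wt by blast
        have nt: "\<not> (\<exists>t'. (t, linv a # t') \<in> ceq E)"
        proof
          assume "\<exists>t'. (t, linv a # t') \<in> ceq E"
          then obtain t' where tt: "(t, linv a # t') \<in> ceq E" by blast
          have ac': "(fst c, fst (linv a)) \<in> E" using ac symE' by simp
          have "(w, linv a # c # t') \<in> ceq E"
            using ceq_trans[OF ceq_trans[OF wt ceq_cons[OF tt]] ceq_swap[OF ac']] .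
          then show False using less.prems(2) by blast
        qed
        have lt: "length t < length w" using ceq_length[OF wt] by simp
        have "tred E (a # t)" using less.hyps[OF lt tr nt] .
        then show False using not_tred ceq_sym'[OF pt] by blast
      qed
    qed
  qed
qed


lemma act_del: "(w, linv a # t) \<in> ceq E \<Longrightarrow> (act E a w, t) \<in> ceq E"
proof -
  assume h: "(w, linv a # t) \<in> ceq E"
  then have ex: "\<exists>t. (w, linv a # t) \<in> ceq E" by blast
  have "(w, linv a # act E a w) \<in> ceq E"
    unfolding act_def using ex someI_ex[OF ex] by simp
  then have "(linv a # act E a w, linv a # t) \<in> ceq E" by (rule ceq_trans[OF ceq_sym' h])
  then show ?thesis using cancel by blast
qed

lemma act_add: "\<not> (\<exists>t. (w, linv a # t) \<in> ceq E) \<Longrightarrow> act E a w = a # w"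
  unfolding act_def by simp

lemma act_ceq: "(w, w') \<in> ceq E \<Longrightarrow> (act E a w, act E a w') \<in> ceq E"
proof (cases "\<exists>t. (w, linv a # t) \<in> ceq E")
  case True
  assume ww: "(w, w') \<in> ceq E"
  then obtain t where t: "(w, linv a # t) \<in> ceq E" using True by blast
  have t': "(w', linv a # t) \<in> ceq E" using ceq_trans[OF ceq_sym'[OF ww] t] .
  show ?thesis by (rule ceq_trans[OF act_del[OF t] ceq_sym'[OF act_del[OF t']]])
next
  case False
  assume ww: "(w, w') \<in> ceq E"
  have F': "\<not> (\<exists>t. (w', linv a # t) \<in> ceq E)" using False ceq_trans[OF ww] by blast
  show ?thesis using act_add[OF False] act_add[OF F'] ceq_cons[OF ww] by simp
qed

lemma tred_act: "tred E w \<Longrightarrow> tred E (act E a w)"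
proof (cases "\<exists>t. (w, linv a # t) \<in> ceq E")
  case True
  assume tw: "tred E w"
  then obtain t where t: "(w, linv a # t) \<in> ceq E" using True by blast
  have "tred E t" using tred_tail tred_ceq[OF tw t] by blast
  then show ?thesis by (rule tred_ceq[OF _ ceq_sym'[OF act_del[OF t]]])
next
  case False
  assume "tred E w"
  then show ?thesis using act_add[OF False] tred_prep[OF _ False] by simp
qed

lemma act_inv: "tred E w \<Longrightarrow> (act E a (act E (linv a) w), w) \<in> ceq E"
proof (cases "\<exists>t. (w, a # t) \<in> ceq E")
  case True
  assume tw: "tred E w"
  then obtain t where t: "(w, a # t) \<in> ceq E" using True by blast
  have 1: "(act E (linv a) w, t) \<in> ceq E" using act_del[of w "linv a" t] t by simp
  have nt: "\<not> (\<exists>t'. (t, linv a # t') \<in> ceq E)"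
  proof
    assume "\<exists>t'. (t, linv a # t') \<in> ceq E"
    then obtain t' where "(t, linv a # t') \<in> ceq E" by blast
    then have "(w, [] @ a # linv a # t') \<in> ceq E" using ceq_trans[OF t ceq_cons] by simp
    then show False using tw not_tred by blast
  qed
  have "(act E a (act E (linv a) w), act E a t) \<in> ceq E" using act_ceq[OF 1] .
  moreover have "act E a t = a # t" using act_add[OF nt] .
  ultimately show ?thesis using ceq_trans[OF _ ceq_sym'[OF t]] by simp
next
  case False
  have "act E (linv a) w = linv a # w" using act_add[of w "linv a"] False by simp
  moreover have "(act E a (linv a # w), w) \<in> ceq E" by (rule act_del) simp
  ultimately show ?thesis by simp
qed

lemma act_comm_aux:
  assumes ab: "(fst a, fst b) \<in> E" and tb: "(w, linv b # tb) \<in> ceq E"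
    and nDa: "\<not> (\<exists>t. (w, linv a # t) \<in> ceq E)"
  shows "(act E a (act E b w), a # tb) \<in> ceq E" "(act E b (act E a w), a # tb) \<in> ceq E"
proof -
  have ba: "(fst (linv b), fst (linv a)) \<in> E" using ab symE' by simp
  have nt: "\<not> (\<exists>t'. (tb, linv a # t') \<in> ceq E)"
  proof
    assume "\<exists>t'. (tb, linv a # t') \<in> ceq E"
    then obtain t' where "(tb, linv a # t') \<in> ceq E" by blast
    then have "(w, linv a # linv b # t') \<in> ceq E"
      using ceq_trans[OF ceq_trans[OF tb ceq_cons] ceq_swap[OF ba]] by blast
    then show False using nDa by blast
  qed
  have "(act E a (act E b w), act E a tb) \<in> ceq E" using act_ceq[OF act_del[OF tb]] .
  then show "(act E a (act E b w), a # tb) \<in> ceq E" using act_add[OF nt] by simp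
  have ab': "(fst a, fst (linv b)) \<in> E" using ab by simp
  have "(a # w, linv b # a # tb) \<in> ceq E"
    using ceq_trans[OF ceq_cons[OF tb] ceq_swap[OF ab']] .
  then show "(act E b (act E a w), a # tb) \<in> ceq E" using act_add[OF nDa] act_del by simp
qed

lemma act_comm: "(fst a, fst b) \<in> E \<Longrightarrow> (act E a (act E b w), act E b (act E a w)) \<in> ceq E"
proof -
  assume ab: "(fst a, fst b) \<in> E"
  have ba: "(fst b, fst a) \<in> E" using ab symE' by blast
  have neq: "fst a \<noteq> fst b" using ab irr by auto
  show ?thesis
  proof (cases "\<exists>t. (w, linv a # t) \<in> ceq E"; cases "\<exists>t. (w, linv b # t) \<in> ceq E")
    assume "\<exists>t. (w, linv a # t) \<in> ceq E" "\<exists>t. (w, linv b # t) \<in> ceq E"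
    then obtain ta tb where ta: "(w, linv a # ta) \<in> ceq E" and tb: "(w, linv b # tb) \<in> ceq E" by blast
    have ll: "(linv a # ta, linv b # tb) \<in> ceq E" using ceq_trans[OF ceq_sym'[OF ta] tb] .
    have "linv a \<noteq> linv b" using neq by (metis fst_linv)
    with levi'[OF ll] obtain t where t1: "(ta, linv b # t) \<in> ceq E" and t2: "(tb, linv a # t) \<in> ceq E"
      by blast
    have "(act E a (act E b w), t) \<in> ceq E"
      using ceq_trans[OF act_ceq[OF act_del[OF tb]] act_del[OF t2]] .
    moreover have "(act E b (act E a w), t) \<in> ceq E"
      using ceq_trans[OF act_ceq[OF act_del[OF ta]] act_del[OF t1]] .
    ultimately show ?thesis by (rule ceq_trans[OF _ ceq_sym'])
  next
    assume nb: "\<not> (\<exists>t. (w, linv b # t) \<in> ceq E)" and "\<exists>t. (w, linv a # t) \<in> ceq E"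
    then obtain ta where ta: "(w, linv a # ta) \<in> ceq E" by blast
    note c = act_comm_aux[OF ba ta nb]
    show ?thesis by (rule ceq_trans[OF c(2) ceq_sym'[OF c(1)]])
  next
    assume na: "\<not> (\<exists>t. (w, linv a # t) \<in> ceq E)" and "\<exists>t. (w, linv b # t) \<in> ceq E"
    then obtain tb where tb: "(w, linv b # tb) \<in> ceq E" by blast
    note c = act_comm_aux[OF ab tb na]
    show ?thesis by (rule ceq_trans[OF c(1) ceq_sym'[OF c(2)]])
  next
    assume na: "\<not> (\<exists>t. (w, linv a # t) \<in> ceq E)" and nb: "\<not> (\<exists>t. (w, linv b # t) \<in> ceq E)"
    have n1: "\<not> (\<exists>t. (b # w, linv a # t) \<in> ceq E)"
    proof
      assume "\<exists>t. (b # w, linv a # t) \<in> ceq E"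
      then obtain t where "(b # w, linv a # t) \<in> ceq E" by blast
      moreover have "b \<noteq> linv a" using neq by (metis fst_linv)
      ultimately show False using levi' na by blast
    qed
    have n2: "\<not> (\<exists>t. (a # w, linv b # t) \<in> ceq E)"
    proof
      assume "\<exists>t. (a # w, linv b # t) \<in> ceq E"
      then obtain t where "(a # w, linv b # t) \<in> ceq E" by blast
      moreover have "a \<noteq> linv b" using neq by (metis fst_linv)
      ultimately show False using levi' nb by blast
    qed
    show ?thesis using act_add[OF na] act_add[OF nb] act_add[OF n1] act_add[OF n2] ceq_swap[OF ab] by simp
  qed
qed

definition actw :: "('a \<times> bool) list \<Rightarrow> ('a \<times> bool) list \<Rightarrow> ('a \<times> bool) list" where
  "actw u w = foldr (act E) u w"

lemma actw_simps[simp]: "actw [] w = w" "actw (a # u) w = act E a (actw u w)"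
  "actw (p @ q) w = actw p (actw q w)"
  unfolding actw_def by simp_all

lemma tred_actw: "tred E w \<Longrightarrow> tred E (actw u w)"
  by (induction u) (auto intro: tred_act)

lemma actw_ceq: "(w, w') \<in> ceq E \<Longrightarrow> (actw u w, actw u w') \<in> ceq E"
  by (induction u) (auto intro: act_ceq)

lemma actw_step: "(u1, u2) \<in> gg_step V E \<Longrightarrow> tred E w \<Longrightarrow> (actw u1 w, actw u2 w) \<in> ceq E"
proof -
  assume st: "(u1, u2) \<in> gg_step V E" and tw: "tred E w"
  from st show ?thesis unfolding gg_step_def
  proof (elim UnE CollectE exE conjE)
    fix a b x e assume u: "(u1, u2) = (a @ [(x, e), (x, \<not> e)] @ b, a @ b)"
    have "(act E (x, e) (act E (linv (x, e)) (actw b w)), actw b w) \<in> ceq E"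
      by (rule act_inv) (rule tred_actw[OF tw])
    then show ?thesis using u actw_ceq by simp
  next
    fix a b x e y d assume u: "(u1, u2) = (a @ [(x, e), (y, d)] @ b, a @ [(y, d), (x, e)] @ b)"
      and xy: "(x, y) \<in> E"
    have "(act E (x, e) (act E (y, d) (actw b w)), act E (y, d) (act E (x, e) (actw b w))) \<in> ceq E"
      by (rule act_comm) (simp add: xy)
    then show ?thesis using u actw_ceq by simp
  qed
qed

lemma actw_rel: "(u1, u2) \<in> (gg_step V E \<union> (gg_step V E)\<inverse>)\<^sup>* \<Longrightarrow> tred E w \<Longrightarrow>
    (actw u1 w, actw u2 w) \<in> ceq E"
proof (induction rule: rtrancl_induct)
  case base then show ?case by simp
next
  case (step y z)
  from step.hyps(2) have "(actw y w, actw z w) \<in> ceq E"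
    using actw_step[OF _ step.prems] ceq_sym'[OF actw_step[OF _ step.prems]] by blast
  then show ?case by (rule ceq_trans[OF step.IH[OF step.prems]])
qed

lemma actw_tred: "tred E u \<Longrightarrow> (actw u [], u) \<in> ceq E"
proof (induction u)
  case Nil then show ?case by simp
next
  case (Cons a u)
  have tu: "tred E u" using tred_tail[OF Cons.prems] .
  have nt: "\<not> (\<exists>t. (u, linv a # t) \<in> ceq E)"
  proof
    assume "\<exists>t. (u, linv a # t) \<in> ceq E"
    then obtain t where "(u, linv a # t) \<in> ceq E" by blast
    then have "(a # u, [] @ a # linv a # t) \<in> ceq E" using ceq_cons by fastforce
    then show False using Cons.prems not_tred by blast
  qed
  have "(act E a (actw u []), act E a u) \<in> ceq E" using act_ceq[OF Cons.IH[OF tu]] .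
  then show ?case using act_add[OF nt] by simp
qed

theorem tred_nontrivial: "tred E u \<Longrightarrow> (u, []) \<in> (gg_step V E \<union> (gg_step V E)\<inverse>)\<^sup>* \<Longrightarrow> u = []"
proof -
  assume tu: "tred E u" and r: "(u, []) \<in> (gg_step V E \<union> (gg_step V E)\<inverse>)\<^sup>*"
  have "(actw u [], actw [] []) \<in> ceq E" using actw_rel[OF r tred_Nil] .
  then have "(u, []) \<in> ceq E" using ceq_trans[OF ceq_sym'[OF actw_tred[OF tu]]] by simp
  then show ?thesis using ceq_Nil by blast
qed

end


abbreviation gsym where "gsym V E \<equiv> gg_step V E \<union> (gg_step V E)\<inverse>"

definition invw :: "('a \<times> bool) list \<Rightarrow> ('a \<times> bool) list" where
  "invw u = rev (map linv u)"

lemma words_append[simp]: "u @ v \<in> gg_words V \<longleftrightarrow> u \<in> gg_words V \<and> v \<in> gg_words V"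
  unfolding gg_words_def by auto

lemma words_Cons[simp]: "a # v \<in> gg_words V \<longleftrightarrow> fst a \<in> V \<and> v \<in> gg_words V"
  unfolding gg_words_def by auto

lemma words_Nil[simp]: "[] \<in> gg_words V"
  unfolding gg_words_def by auto

lemma words_invw[simp]: "invw u \<in> gg_words V \<longleftrightarrow> u \<in> gg_words V"
  unfolding gg_words_def invw_def by (force simp: image_iff)

context
  fixes V :: "'a set" and E :: "('a \<times> 'a) set"
  assumes EV: "E \<subseteq> V \<times> V"
begin

lemma step_words: "(x, y) \<in> gg_step V E \<Longrightarrow> x \<in> gg_words V \<and> y \<in> gg_words V"
  unfolding gg_step_def using EV by auto

lemma gsym_words: "(x, y) \<in> gsym V E \<Longrightarrow> x \<in> gg_words V \<and> y \<in> gg_words V"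
  using step_words by blast

lemma gsym_rtr_words: "(x, y) \<in> (gsym V E)\<^sup>* \<Longrightarrow> x \<in> gg_words V \<Longrightarrow> y \<in> gg_words V"
  by (induction rule: rtrancl_induct) (use step_words in blast)+

lemma rel_iff: "(x, y) \<in> gg_rel V E \<longleftrightarrow> x \<in> gg_words V \<and> (x, y) \<in> (gsym V E)\<^sup>*"
  unfolding gg_rel_def using gsym_rtr_words by blast

lemma rel_words: "(x, y) \<in> gg_rel V E \<Longrightarrow> x \<in> gg_words V \<and> y \<in> gg_words V"
  unfolding gg_rel_def by blast

lemma rel_refl: "x \<in> gg_words V \<Longrightarrow> (x, x) \<in> gg_rel V E"
  unfolding rel_iff by blast

lemma rel_sym: "(x, y) \<in> gg_rel V E \<Longrightarrow> (y, x) \<in> gg_rel V E"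
proof -
  have "sym ((gsym V E)\<^sup>*)" by (rule sym_rtrancl) (auto simp: sym_def)
  then show "(x, y) \<in> gg_rel V E \<Longrightarrow> (y, x) \<in> gg_rel V E"
    unfolding gg_rel_def by (auto simp: sym_def)
qed

lemma rel_trans: "(x, y) \<in> gg_rel V E \<Longrightarrow> (y, z) \<in> gg_rel V E \<Longrightarrow> (x, z) \<in> gg_rel V E"
  unfolding gg_rel_def by (auto intro: rtrancl_trans)

lemma equiv_rel: "equiv (gg_words V) (gg_rel V E)"
  by (rule equivI) (auto simp: refl_on_def sym_def trans_def dest: rel_words intro: rel_refl rel_sym rel_trans)

lemma step_cong: "(x, y) \<in> gg_step V E \<Longrightarrow> p \<in> gg_words V \<Longrightarrow> q \<in> gg_words V \<Longrightarrow>
    (p @ x @ q, p @ y @ q) \<in> gg_step V E"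
  unfolding gg_step_def
proof (elim UnE CollectE exE conjE)
  fix a b x' e assume "(x, y) = (a @ [(x', e), (x', \<not> e)] @ b, a @ b)" "a \<in> gg_words V"
    "b \<in> gg_words V" "x' \<in> V" "p \<in> gg_words V" "q \<in> gg_words V"
  then show "(p @ x @ q, p @ y @ q)
    \<in> {(a @ [(x, e), (x, \<not> e)] @ b, a @ b) |a b x e. a \<in> gg_words V \<and> b \<in> gg_words V \<and> x \<in> V} \<union>
       {(a @ [(x, e), (y, d)] @ b, a @ [(y, d), (x, e)] @ b) |a b x e y d.
        a \<in> gg_words V \<and> b \<in> gg_words V \<and> (x, y) \<in> E}"
    by (intro UnI1 CollectI exI[of _ "p @ a"] exI[of _ "b @ q"] exI[of _ x'] exI[of _ e]) auto
next
  fix a b x' e y' d assume "(x, y) = (a @ [(x', e), (y', d)] @ b, a @ [(y', d), (x', e)] @ b)"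
    "a \<in> gg_words V" "b \<in> gg_words V" "(x', y') \<in> E" "p \<in> gg_words V" "q \<in> gg_words V"
  then show "(p @ x @ q, p @ y @ q)
    \<in> {(a @ [(x, e), (x, \<not> e)] @ b, a @ b) |a b x e. a \<in> gg_words V \<and> b \<in> gg_words V \<and> x \<in> V} \<union>
       {(a @ [(x, e), (y, d)] @ b, a @ [(y, d), (x, e)] @ b) |a b x e y d.
        a \<in> gg_words V \<and> b \<in> gg_words V \<and> (x, y) \<in> E}"
    by (intro UnI2 CollectI exI[of _ "p @ a"] exI[of _ "b @ q"] exI[of _ x'] exI[of _ e]
        exI[of _ y'] exI[of _ d]) auto
qed

lemma rel_cong: "(x, y) \<in> gg_rel V E \<Longrightarrow> p \<in> gg_words V \<Longrightarrow> q \<in> gg_words V \<Longrightarrow>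
    (p @ x @ q, p @ y @ q) \<in> gg_rel V E"
proof -
  assume r: "(x, y) \<in> gg_rel V E" and p: "p \<in> gg_words V" and q: "q \<in> gg_words V"
  from r have x: "x \<in> gg_words V" and rr: "(x, y) \<in> (gsym V E)\<^sup>*" unfolding rel_iff by auto
  from rr have "(p @ x @ q, p @ y @ q) \<in> (gsym V E)\<^sup>*"
  proof (induction rule: rtrancl_induct)
    case base then show ?case by simp
  next
    case (step y z)
    then have "(p @ y @ q, p @ z @ q) \<in> gsym V E" using step_cong p q by blast
    then show ?case using step.IH by (rule rtrancl_into_rtrancl[rotated])
  qed
  then show ?thesis unfolding rel_iff using x p q by simp
qed

lemma rel_app: "(x, x') \<in> gg_rel V E \<Longrightarrow> (y, y') \<in> gg_rel V E \<Longrightarrow> (x @ y, x' @ y') \<in> gg_rel V E"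
proof -
  assume a: "(x, x') \<in> gg_rel V E" and b: "(y, y') \<in> gg_rel V E"
  have 1: "(x @ y, x' @ y) \<in> gg_rel V E" using rel_cong[OF a, of "[]" y] rel_words[OF b] by simp
  have 2: "(x' @ y, x' @ y') \<in> gg_rel V E" using rel_cong[OF b, of x' "[]"] rel_words[OF a] by simp
  show ?thesis using rel_trans[OF 1 2] .
qed

lemma rel_cancel: "x \<in> V \<Longrightarrow> ([(x, e), (x, \<not> e)], []) \<in> gg_rel V E"
proof -
  assume x: "x \<in> V"
  have "([] @ [(x, e), (x, \<not> e)] @ [], [] @ []) \<in> gg_step V E"
    unfolding gg_step_def using x
    by (intro UnI1 CollectI exI[of _ "[]"] exI[of _ "[]"] exI[of _ x] exI[of _ e]) auto
  then show ?thesis unfolding rel_iff using x by auto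
qed

lemma rel_cancel': "fst a \<in> V \<Longrightarrow> ([a, linv a], []) \<in> gg_rel V E"
  using rel_cancel by (cases a) auto

lemma rel_comm: "(x, y) \<in> E \<Longrightarrow> ([(x, e), (y, d)], [(y, d), (x, e)]) \<in> gg_rel V E"
proof -
  assume xy: "(x, y) \<in> E"
  have "([] @ [(x, e), (y, d)] @ [], [] @ [(y, d), (x, e)] @ []) \<in> gg_step V E"
    unfolding gg_step_def using xy
    by (intro UnI2 CollectI exI[of _ "[]"] exI[of _ "[]"] exI[of _ x] exI[of _ e] exI[of _ y] exI[of _ d]) auto
  then show ?thesis unfolding rel_iff using xy EV by auto
qed

lemma rel_invw: "u \<in> gg_words V \<Longrightarrow> (u @ invw u, []) \<in> gg_rel V E"
proof (induction u)
  case Nil then show ?case by (simp add: invw_def rel_refl)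
next
  case (Cons a u)
  have "a # u @ invw u @ [linv a] = [a] @ (u @ invw u) @ [linv a]" by simp
  have 1: "([a] @ (u @ invw u) @ [linv a], [a] @ [] @ [linv a]) \<in> gg_rel V E"
    using rel_cong[OF Cons.IH, of "[a]" "[linv a]"] Cons.prems by simp
  have 2: "([a, linv a], []) \<in> gg_rel V E" using rel_cancel' Cons.prems by simp
  show ?case using rel_trans[OF 1] 2 by (simp add: invw_def)
qed

lemma rel_invw': "u \<in> gg_words V \<Longrightarrow> (invw u @ u, []) \<in> gg_rel V E"
proof -
  assume u: "u \<in> gg_words V"
  have "invw (invw u) = u" unfolding invw_def by (simp add: rev_map comp_def)
  then show ?thesis using rel_invw[of "invw u"] u by simp
qed

lemma rel_class_eq: "x \<in> gg_words V \<Longrightarrow> gg_rel V E `` {x} = gg_rel V E `` {y} \<longleftrightarrow> (x, y) \<in> gg_rel V E"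
proof
  assume x: "x \<in> gg_words V" and eq: "gg_rel V E `` {x} = gg_rel V E `` {y}"
  have "x \<in> gg_rel V E `` {x}" using rel_refl[OF x] by simp
  then have "(y, x) \<in> gg_rel V E" using eq by simp
  then show "(x, y) \<in> gg_rel V E" by (rule rel_sym)
next
  assume "(x, y) \<in> gg_rel V E"
  then show "gg_rel V E `` {x} = gg_rel V E `` {y}" by (rule equiv_class_eq[OF equiv_rel])
qed

lemma carrier_gg: "carrier (graph_group V E) = gg_words V // gg_rel V E"
  unfolding graph_group_def by simp

lemma mult_gg: "x \<in> gg_words V \<Longrightarrow> y \<in> gg_words V \<Longrightarrow>
   gg_rel V E `` {x} \<otimes>\<^bsub>graph_group V E\<^esub> gg_rel V E `` {y} = gg_rel V E `` {x @ y}"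
proof -
  assume x: "x \<in> gg_words V" and y: "y \<in> gg_words V"
  have "\<And>x' y'. x' \<in> gg_rel V E `` {x} \<Longrightarrow> y' \<in> gg_rel V E `` {y} \<Longrightarrow>
      gg_rel V E `` {x' @ y'} = gg_rel V E `` {x @ y}"
  proof -
    fix x' y' assume "x' \<in> gg_rel V E `` {x}" "y' \<in> gg_rel V E `` {y}"
    then have "(x', x) \<in> gg_rel V E" "(y', y) \<in> gg_rel V E" using rel_sym by auto
    then have "(x' @ y', x @ y) \<in> gg_rel V E" by (rule rel_app)
    then show "gg_rel V E `` {x' @ y'} = gg_rel V E `` {x @ y}"
      using rel_class_eq[of "x' @ y'" "x @ y"] rel_words[of "x' @ y'" "x @ y"] by blast
  qed
  moreover have "x \<in> gg_rel V E `` {x}" "y \<in> gg_rel V E `` {y}" using rel_refl x y by auto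
  ultimately have "{gg_rel V E `` {x' @ y'} | x' y'. x' \<in> gg_rel V E `` {x} \<and> y' \<in> gg_rel V E `` {y}}
     = {gg_rel V E `` {x @ y}}" by blast
  then show ?thesis unfolding graph_group_def by simp
qed

lemma one_gg: "\<one>\<^bsub>graph_group V E\<^esub> = gg_rel V E `` {[]}"
  unfolding graph_group_def by simp

lemma carrier_ggE: "X \<in> carrier (graph_group V E) \<Longrightarrow> (\<And>x. x \<in> gg_words V \<Longrightarrow> X = gg_rel V E `` {x} \<Longrightarrow> P) \<Longrightarrow> P"
  unfolding carrier_gg by (auto elim: quotientE)

lemma class_in_carrier: "x \<in> gg_words V \<Longrightarrow> gg_rel V E `` {x} \<in> carrier (graph_group V E)"
  unfolding carrier_gg by (rule quotientI)

lemma group_gg: "group (graph_group V E)"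
proof (rule groupI)
  fix X Y assume "X \<in> carrier (graph_group V E)" "Y \<in> carrier (graph_group V E)"
  then show "X \<otimes>\<^bsub>graph_group V E\<^esub> Y \<in> carrier (graph_group V E)"
    by (auto elim!: carrier_ggE simp: mult_gg class_in_carrier)
next
  show "\<one>\<^bsub>graph_group V E\<^esub> \<in> carrier (graph_group V E)"
    by (simp add: one_gg class_in_carrier)
next
  fix X Y Z assume "X \<in> carrier (graph_group V E)" "Y \<in> carrier (graph_group V E)"
    "Z \<in> carrier (graph_group V E)"
  then show "X \<otimes>\<^bsub>graph_group V E\<^esub> Y \<otimes>\<^bsub>graph_group V E\<^esub> Z =
      X \<otimes>\<^bsub>graph_group V E\<^esub> (Y \<otimes>\<^bsub>graph_group V E\<^esub> Z)"
    by (auto elim!: carrier_ggE simp: mult_gg)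
next
  fix X assume "X \<in> carrier (graph_group V E)"
  then show "\<one>\<^bsub>graph_group V E\<^esub> \<otimes>\<^bsub>graph_group V E\<^esub> X = X"
    by (auto elim!: carrier_ggE simp: mult_gg one_gg)
next
  fix X assume "X \<in> carrier (graph_group V E)"
  then obtain x where x: "x \<in> gg_words V" and X: "X = gg_rel V E `` {x}" by (rule carrier_ggE)
  have "gg_rel V E `` {invw x} \<otimes>\<^bsub>graph_group V E\<^esub> X = \<one>\<^bsub>graph_group V E\<^esub>"
    using x X mult_gg one_gg rel_invw' rel_class_eq by simp
  then show "\<exists>Y\<in>carrier (graph_group V E). Y \<otimes>\<^bsub>graph_group V E\<^esub> X = \<one>\<^bsub>graph_group V E\<^esub>"
    using x class_in_carrier by auto
qed

lemma inv_gg: "x \<in> gg_words V \<Longrightarrow> inv\<^bsub>graph_group V E\<^esub> (gg_rel V E `` {x}) = gg_rel V E `` {invw x}"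
  by (rule group.inv_equality[OF group_gg])
    (simp_all add: mult_gg one_gg rel_invw' rel_class_eq class_in_carrier)

end


definition subw :: "('a \<times> bool \<Rightarrow> ('b \<times> bool) list) \<Rightarrow> ('a \<times> bool) list \<Rightarrow> ('b \<times> bool) list" where
  "subw \<sigma> u = concat (map \<sigma> u)"

lemma subw_simps[simp]: "subw \<sigma> [] = []" "subw \<sigma> (a # u) = \<sigma> a @ subw \<sigma> u"
  "subw \<sigma> (u @ v) = subw \<sigma> u @ subw \<sigma> v"
  unfolding subw_def by simp_all

definition subh :: "'b set \<Rightarrow> ('b \<times> 'b) set \<Rightarrow> ('a \<times> bool \<Rightarrow> ('b \<times> bool) list) \<Rightarrow>
    ('a \<times> bool) list set \<Rightarrow> ('b \<times> bool) list set" where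
  "subh V' E' \<sigma> X = gg_rel V' E' `` {subw \<sigma> (SOME x. x \<in> X)}"

locale gsub =
  fixes V :: "'a set" and E and V' :: "'b set" and E' and \<sigma> :: "'a \<times> bool \<Rightarrow> ('b \<times> bool) list"
  assumes EV: "E \<subseteq> V \<times> V" and EV': "E' \<subseteq> V' \<times> V'"
    and hw: "\<And>a. fst a \<in> V \<Longrightarrow> \<sigma> a \<in> gg_words V'"
    and hinv: "\<And>a. fst a \<in> V \<Longrightarrow> (\<sigma> a @ \<sigma> (linv a), []) \<in> gg_rel V' E'"
    and hcomm: "\<And>a b. (fst a, fst b) \<in> E \<Longrightarrow> (\<sigma> a @ \<sigma> b, \<sigma> b @ \<sigma> a) \<in> gg_rel V' E'"
begin

lemma subw_words: "u \<in> gg_words V \<Longrightarrow> subw \<sigma> u \<in> gg_words V'"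
  by (induction u) (auto intro: hw)

lemma sub_step: "(u, v) \<in> gg_step V E \<Longrightarrow> (subw \<sigma> u, subw \<sigma> v) \<in> gg_rel V' E'"
  unfolding gg_step_def
proof (elim UnE CollectE exE conjE)
  fix a b x e assume uv: "(u, v) = (a @ [(x, e), (x, \<not> e)] @ b, a @ b)" and a: "a \<in> gg_words V"
    and b: "b \<in> gg_words V" and x: "x \<in> V"
  have "(\<sigma> (x, e) @ \<sigma> (linv (x, e)), []) \<in> gg_rel V' E'" using hinv[of "(x, e)"] x by simp
  from rel_cong[OF EV' this subw_words[OF a] subw_words[OF b]]
  show ?thesis using uv by simp
next
  fix a b x e y d assume uv: "(u, v) = (a @ [(x, e), (y, d)] @ b, a @ [(y, d), (x, e)] @ b)"
    and a: "a \<in> gg_words V" and b: "b \<in> gg_words V" and xy: "(x, y) \<in> E"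
  have "(\<sigma> (x, e) @ \<sigma> (y, d), \<sigma> (y, d) @ \<sigma> (x, e)) \<in> gg_rel V' E'" using hcomm xy by simp
  from rel_cong[OF EV' this subw_words[OF a] subw_words[OF b]]
  show ?thesis using uv by simp
qed

lemma sub_rel: "(u, v) \<in> gg_rel V E \<Longrightarrow> (subw \<sigma> u, subw \<sigma> v) \<in> gg_rel V' E'"
proof -
  assume "(u, v) \<in> gg_rel V E"
  then have u: "u \<in> gg_words V" and r: "(u, v) \<in> (gsym V E)\<^sup>*" using rel_iff[OF EV] by auto
  from r show ?thesis
  proof (induction rule: rtrancl_induct)
    case base then show ?case using rel_refl[OF EV' subw_words[OF u]] .
  next
    case (step y z)
    from step.hyps(2) have "(subw \<sigma> y, subw \<sigma> z) \<in> gg_rel V' E'"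
      using sub_step rel_sym[OF EV'] by blast
    then show ?case using rel_trans[OF EV' step.IH] by blast
  qed
qed

lemma subh_class: "x \<in> gg_words V \<Longrightarrow> subh V' E' \<sigma> (gg_rel V E `` {x}) = gg_rel V' E' `` {subw \<sigma> x}"
proof -
  assume x: "x \<in> gg_words V"
  have ex: "\<exists>y. y \<in> gg_rel V E `` {x}" using rel_refl[OF EV x] by blast
  have "(x, SOME y. y \<in> gg_rel V E `` {x}) \<in> gg_rel V E" using someI_ex[OF ex] by simp
  then have "(subw \<sigma> x, subw \<sigma> (SOME y. y \<in> gg_rel V E `` {x})) \<in> gg_rel V' E'" by (rule sub_rel)
  then have "gg_rel V' E' `` {subw \<sigma> x} = gg_rel V' E' `` {subw \<sigma> (SOME y. y \<in> gg_rel V E `` {x})}"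
    using rel_class_eq[OF EV' subw_words[OF x]] by blast
  then show ?thesis unfolding subh_def by simp
qed

lemma subh_hom: "subh V' E' \<sigma> \<in> hom (graph_group V E) (graph_group V' E')"
proof (rule homI)
  fix X assume "X \<in> carrier (graph_group V E)"
  then show "subh V' E' \<sigma> X \<in> carrier (graph_group V' E')"
    by (auto elim!: carrier_ggE[OF EV] simp: subh_class class_in_carrier[OF EV'] subw_words)
next
  fix X Y assume "X \<in> carrier (graph_group V E)" "Y \<in> carrier (graph_group V E)"
  then show "subh V' E' \<sigma> (X \<otimes>\<^bsub>graph_group V E\<^esub> Y) =
      subh V' E' \<sigma> X \<otimes>\<^bsub>graph_group V' E'\<^esub> subh V' E' \<sigma> Y"
    by (auto elim!: carrier_ggE[OF EV] simp: subh_class mult_gg[OF EV] mult_gg[OF EV'] subw_words)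
qed

end

fun tms :: "qf_form \<Rightarrow> gterm set" where
  "tms (FEq t u) = {t, u}"
| "tms FFalse = {}"
| "tms (FNot f) = tms f"
| "tms (FAnd f g) = tms f \<union> tms g"
| "tms (FOr f g) = tms f \<union> tms g"

lemma finite_tms: "finite (tms \<phi>)"
  by (induction \<phi>) auto

lemma geval_closed: "group H \<Longrightarrow> \<forall>n. s n \<in> carrier H \<Longrightarrow> geval H s t \<in> carrier H"
  by (induction t) (auto simp: group.is_monoid monoid.one_closed monoid.m_closed group.inv_closed)

lemma geval_hom:
  assumes gH: "group H" and gG: "group G" and f: "f \<in> hom H G" and s: "\<forall>n. s n \<in> carrier H"
  shows "geval H s t \<in> carrier H \<and> geval G (f \<circ> s) t = f (geval H s t)"
proof (induction t)
  case (GVar n) then show ?case using s by simp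
next
  case GOne then show ?case using gH gG f by (simp add: group.is_monoid monoid.one_closed hom_one)
next
  case (GMul t u) then show ?case using gH gG f by (simp add: group.is_monoid monoid.m_closed hom_mult)
next
  case (GInv t)
  have gh: "group_hom H G f" unfolding group_hom_def group_hom_axioms_def using gH gG f by simp
  from GInv show ?case using group_hom.hom_inv[OF gh] gH by (simp add: group.inv_closed)
qed

lemma fsat_hom:
  assumes gH: "group H" and gG: "group G" and f: "f \<in> hom H G" and s: "\<forall>n. s n \<in> carrier H"
    and inj: "inj_on f (geval H s ` tms \<phi>)"
  shows "fsat G (f \<circ> s) \<phi> \<longleftrightarrow> fsat H s \<phi>"
  using inj
proof (induction \<phi>)
  case (FEq t u)
  have e1: "geval G (f \<circ> s) t = f (geval H s t)" using geval_hom[OF gH gG f s, of t] by blast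
  have e2: "geval G (f \<circ> s) u = f (geval H s u)" using geval_hom[OF gH gG f s, of u] by blast
  have "f (geval H s t) = f (geval H s u) \<longleftrightarrow> geval H s t = geval H s u"
    by (rule inj_on_eq_iff[OF FEq.prems]) auto
  then show ?case by (simp only: fsat.simps e1 e2)
next
  case (FAnd f1 f2)
  have "inj_on f (geval H s ` tms f1)" "inj_on f (geval H s ` tms f2)"
    using FAnd.prems by (auto intro: inj_on_subset)
  then show ?case using FAnd.IH by simp
next
  case (FOr f1 f2)
  have "inj_on f (geval H s ` tms f1)" "inj_on f (geval H s ` tms f2)"
    using FOr.prems by (auto intro: inj_on_subset)
  then show ?case using FOr.IH by simp
qed auto

lemma sat_transfer:
  assumes gH: "group H" and gG: "group G"
    and disc: "\<And>S. finite S \<Longrightarrow> S \<subseteq> carrier H \<Longrightarrow> \<exists>f. f \<in> hom H G \<and> inj_on f S"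
    and sat: "sat_universal G \<phi>"
  shows "sat_universal H \<phi>"
  unfolding sat_universal_def
proof (intro allI impI)
  fix s :: "nat \<Rightarrow> _" assume s: "\<forall>n. s n \<in> carrier H"
  have "finite (geval H s ` tms \<phi>)" using finite_tms by simp
  moreover have "geval H s ` tms \<phi> \<subseteq> carrier H" using geval_closed[OF gH s] by blast
  ultimately obtain f where f: "f \<in> hom H G" and inj: "inj_on f (geval H s ` tms \<phi>)"
    using disc by blast
  have "\<forall>n. (f \<circ> s) n \<in> carrier G" using s f by (auto simp: hom_def)
  then have "fsat G (f \<circ> s) \<phi>" using sat unfolding sat_universal_def by blast
  then show "fsat H s \<phi>" using fsat_hom[OF gH gG f s inj] by simp
qed


definition sg :: "bool \<Rightarrow> int" where "sg e = (if e then 1 else -1)"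

definition gpow :: "'a \<Rightarrow> int \<Rightarrow> ('a \<times> bool) list" where
  "gpow x n = replicate (nat \<bar>n\<bar>) (x, 0 \<le> n)"

lemma gpow_0[simp]: "gpow x 0 = []" unfolding gpow_def by simp

lemma gpow_Nil_iff: "gpow x n = [] \<longleftrightarrow> n = 0" unfolding gpow_def by auto

lemma gpow_words: "x \<in> V \<Longrightarrow> gpow x n \<in> gg_words V"
  unfolding gpow_def gg_words_def by auto

lemma set_gpow: "z \<in> set (gpow x n) \<Longrightarrow> fst z = x"
  unfolding gpow_def by (auto split: if_splits)

lemma gpow_unfold: "n \<noteq> 0 \<Longrightarrow> gpow x n = (x, 0 < n) # gpow x (n - sg (0 < n))"
proof -
  assume n: "n \<noteq> 0"
  show ?thesis
  proof (cases "0 < n")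
    case True
    then have "nat \<bar>n\<bar> = Suc (nat \<bar>n - 1\<bar>)" by simp
    then show ?thesis using True unfolding gpow_def sg_def by simp
  next
    case False
    then have "nat \<bar>n\<bar> = Suc (nat \<bar>n + 1\<bar>)" using n by simp
    moreover have "\<not> 0 \<le> n + 1 \<or> n + 1 = 0" using False n by simp
    ultimately show ?thesis using False n unfolding gpow_def sg_def by auto
  qed
qed

context
  fixes V :: "'a set" and E :: "('a \<times> 'a) set"
  assumes EV: "E \<subseteq> V \<times> V"
begin

lemma pow_cons: "x \<in> V \<Longrightarrow> ((x, e) # gpow x n, gpow x (n + sg e)) \<in> gg_rel V E"
proof -
  assume x: "x \<in> V"
  show ?thesis
  proof (cases "(e \<and> 0 \<le> n) \<or> (\<not> e \<and> n \<le> 0)")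
    case True
    have "(x, e) # gpow x n = gpow x (n + sg e)"
    proof (cases e)
      case True
      then have "0 \<le> n" using \<open>(e \<and> 0 \<le> n) \<or> (\<not> e \<and> n \<le> 0)\<close> by auto
      moreover have "nat \<bar>n + 1\<bar> = Suc (nat \<bar>n\<bar>)" using calculation by simp
      ultimately show ?thesis using True unfolding gpow_def sg_def by simp
    next
      case False
      then have n: "n \<le> 0" using \<open>(e \<and> 0 \<le> n) \<or> (\<not> e \<and> n \<le> 0)\<close> by auto
      have "nat \<bar>n - 1\<bar> = Suc (nat \<bar>n\<bar>)" using n by simp
      moreover have "replicate (nat \<bar>n\<bar>) (x, 0 \<le> n) = replicate (nat \<bar>n\<bar>) (x, False)"
        using n by (cases "n = 0") auto
      ultimately show ?thesis using False n unfolding gpow_def sg_def by simp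
    qed
    moreover have "gpow x (n + sg e) \<in> gg_words V" using gpow_words[OF x] .
    ultimately show ?thesis using rel_refl[OF EV] by metis
  next
    case False
    then have n0: "n \<noteq> 0" by auto
    have e: "(0 < n) = (\<not> e)" using False by auto
    have pu: "gpow x n = (x, \<not> e) # gpow x (n + sg e)"
      using gpow_unfold[OF n0, of x] e by (cases e) (auto simp: sg_def)
    have "([] @ [(x, e), (x, \<not> e)] @ gpow x (n + sg e), [] @ [] @ gpow x (n + sg e)) \<in> gg_rel V E"
      by (rule rel_cong[OF EV rel_cancel[OF EV x]]) (auto simp: gpow_words x)
    then show ?thesis using pu by simp
  qed
qed

lemma pow_app: "x \<in> V \<Longrightarrow> (gpow x a @ gpow x b, gpow x (a + b)) \<in> gg_rel V E"
proof (induction "nat \<bar>a\<bar>" arbitrary: a)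
  case 0
  then have "a = 0" by simp
  then show ?case using rel_refl[OF EV gpow_words[OF 0(2)]] by simp
next
  case (Suc k)
  then have a0: "a \<noteq> 0" by auto
  define a' where "a' = a - sg (0 < a)"
  have k: "k = nat \<bar>a'\<bar>" using Suc(2) a0 unfolding a'_def sg_def by auto
  have pa: "gpow x a = (x, 0 < a) # gpow x a'" using gpow_unfold[OF a0] a'_def by simp
  have 1: "([(x, 0 < a)] @ (gpow x a' @ gpow x b) @ [], [(x, 0 < a)] @ gpow x (a' + b) @ []) \<in> gg_rel V E"
    by (rule rel_cong[OF EV Suc(1)[OF k Suc(3)]]) (simp_all add: Suc(3))
  have 2: "((x, 0 < a) # gpow x (a' + b), gpow x (a' + b + sg (0 < a))) \<in> gg_rel V E"
    by (rule pow_cons[OF Suc(3)])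
  have eq: "a' + b + sg (0 < a) = a + b" unfolding a'_def by simp
  from rel_trans[OF EV 1[simplified] 2]
  have "((x, 0 < a) # gpow x a' @ gpow x b, gpow x (a + b)) \<in> gg_rel V E" unfolding eq .
  then show ?case using pa by simp
qed

lemma rel_comm1: "\<forall>d\<in>set q. (fst c, fst d) \<in> E \<Longrightarrow> q \<in> gg_words V \<Longrightarrow> fst c \<in> V \<Longrightarrow>
    (c # q, q @ [c]) \<in> gg_rel V E"
proof (induction q)
  case Nil then show ?case using rel_refl[OF EV] by simp
next
  case (Cons d q)
  have cd: "(fst c, fst d) \<in> E" using Cons.prems by simp
  have 1: "([] @ [c, d] @ q, [] @ [d, c] @ q) \<in> gg_rel V E"
    using rel_cong[OF EV rel_comm[OF EV cd, of "snd c" "snd d"], of "[]" q] Cons.prems by simp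
  have 2: "([d] @ (c # q) @ [], [d] @ (q @ [c]) @ []) \<in> gg_rel V E"
    by (rule rel_cong[OF EV Cons.IH]) (use Cons.prems in auto)
  show ?case using rel_trans[OF EV 1[simplified] 2[simplified]] by simp
qed

lemma rel_comm_lists: "\<forall>c\<in>set p. \<forall>d\<in>set q. (fst c, fst d) \<in> E \<Longrightarrow> p \<in> gg_words V \<Longrightarrow> q \<in> gg_words V \<Longrightarrow>
    (p @ q, q @ p) \<in> gg_rel V E"
proof (induction p)
  case Nil then show ?case using rel_refl[OF EV] by simp
next
  case (Cons c p)
  have 1: "([] @ (c # q) @ p, [] @ (q @ [c]) @ p) \<in> gg_rel V E"
    by (rule rel_cong[OF EV rel_comm1]) (use Cons.prems in auto)
  have 4: "([c] @ (p @ q) @ [], [c] @ (q @ p) @ []) \<in> gg_rel V E"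
    by (rule rel_cong[OF EV Cons.IH]) (use Cons.prems in auto)
  show ?case using rel_trans[OF EV 4[simplified] 1[simplified]] by simp
qed

end


definition sylp :: "('a \<times> int) list \<Rightarrow> ('a \<times> bool) list" where
  "sylp L = concat (map (\<lambda>(v, n). gpow v n) L)"

lemma sylp_simps[simp]: "sylp [] = []" "sylp ((v, n) # L) = gpow v n @ sylp L"
  unfolding sylp_def by simp_all

definition blk :: "('a \<times> 'a) set \<Rightarrow> 'a \<Rightarrow> ('a \<times> 'c) list \<Rightarrow> bool" where
  "blk E v L \<longleftrightarrow> (\<exists>A y B. L = A @ y # B \<and> fst y = v \<and> (\<forall>z\<in>set A. (fst z, v) \<in> E))"

fun sred :: "('a \<times> 'a) set \<Rightarrow> ('a \<times> 'c) list \<Rightarrow> bool" where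
  "sred E [] = True"
| "sred E (x # L) = (sred E L \<and> \<not> blk E (fst x) L)"

context
  fixes E :: "('a \<times> 'a) set"
  assumes symE: "sym E" and irr: "\<forall>v. (v, v) \<notin> E"
begin

lemma lemG: "(p @ X, b # t) \<in> ceq E \<Longrightarrow>
  (\<exists>P c Q. p = P @ c # Q \<and> fst c = fst b \<and> (\<forall>z\<in>set P. (fst z, fst b) \<in> E)) \<or>
  ((\<forall>c\<in>set p. (fst c, fst b) \<in> E) \<and> (\<exists>t'. (X, b # t') \<in> ceq E))"
proof (induction p arbitrary: t)
  case Nil then show ?case by auto
next
  case (Cons c p)
  have cp: "(c # (p @ X), b # t) \<in> ceq E" using Cons.prems by simp
  from levi'[OF symE irr cp]
  show ?case
  proof (elim disjE conjE exE)
    assume "c = b"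
    then show ?thesis by (intro disjI1 exI[of _ "[]"] exI[of _ c] exI[of _ p]) auto
  next
    fix t'' assume cb: "(fst c, fst b) \<in> E" and pt: "(p @ X, b # t'') \<in> ceq E"
    from Cons.IH[OF pt] show ?thesis
    proof (elim disjE conjE exE)
      fix P c' Q assume "p = P @ c' # Q" "fst c' = fst b" "\<forall>z\<in>set P. (fst z, fst b) \<in> E"
      then show ?thesis using cb by (intro disjI1 exI[of _ "c # P"] exI[of _ c'] exI[of _ Q]) auto
    next
      fix t' assume "\<forall>c\<in>set p. (fst c, fst b) \<in> E" "(X, b # t') \<in> ceq E"
      then show ?thesis using cb by auto
    qed
  qed
qed

lemma lemF: "(sylp L, b # t) \<in> ceq E \<Longrightarrow> \<forall>(v, n)\<in>set L. n \<noteq> 0 \<Longrightarrow> blk E (fst b) L"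
proof (induction L arbitrary: t)
  case Nil then show ?case using ceq_length by fastforce
next
  case (Cons vn L)
  obtain v n where vn: "vn = (v, n)" by (cases vn)
  have n0: "n \<noteq> 0" using Cons.prems vn by auto
  have 1: "(gpow v n @ sylp L, b # t) \<in> ceq E" using Cons.prems vn by simp
  from lemG[OF 1] show ?case
  proof (elim disjE conjE exE)
    fix P c Q assume "gpow v n = P @ c # Q" "fst c = fst b"
    then have "v = fst b" using set_gpow[of c v n] by auto
    then show ?thesis unfolding blk_def vn by (intro exI[of _ "[]"] exI[of _ "(v, n)"] exI[of _ L]) auto
  next
    fix t' assume adj: "\<forall>c\<in>set (gpow v n). (fst c, fst b) \<in> E" and X: "(sylp L, b # t') \<in> ceq E"
    have "gpow v n \<noteq> []" using n0 gpow_Nil_iff by metis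
    then obtain c where "c \<in> set (gpow v n)" by (cases "gpow v n") auto
    then have vb: "(v, fst b) \<in> E" using adj set_gpow by metis
    have "blk E (fst b) L" using Cons.IH[OF X] Cons.prems by auto
    then obtain A y B where "L = A @ y # B" "fst y = fst b" "\<forall>z\<in>set A. (fst z, fst b) \<in> E"
      unfolding blk_def by blast
    then show ?thesis unfolding blk_def vn using vb
      by (intro exI[of _ "(v, n) # A"] exI[of _ y] exI[of _ B]) auto
  qed
qed

lemma lemS: "sred E L \<Longrightarrow> \<forall>(v, n)\<in>set L. n \<noteq> 0 \<Longrightarrow> tred E (sylp L)"
proof (induction L)
  case Nil then show ?case using tred_Nil[OF symE irr] by simp
next
  case (Cons vn L)
  obtain v n where vn: "vn = (v, n)" by (cases vn)
  have tL: "tred E (sylp L)" using Cons by (auto simp: vn)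
  have nb: "\<not> blk E v L" using Cons.prems vn by simp
  have nz: "\<forall>(v, n)\<in>set L. n \<noteq> 0" using Cons.prems by auto
  define a where "a = (v, 0 \<le> n)"
  have "tred E (replicate j a @ sylp L)" for j
  proof (induction j)
    case 0 then show ?case using tL by simp
  next
    case (Suc j)
    have nt: "\<not> (\<exists>t. (replicate j a @ sylp L, linv a # t) \<in> ceq E)"
    proof
      assume "\<exists>t. (replicate j a @ sylp L, linv a # t) \<in> ceq E"
      then obtain t where t: "(replicate j a @ sylp L, linv a # t) \<in> ceq E" by blast
      show False
      proof (cases j)
        case 0
        then have "(sylp L, linv a # t) \<in> ceq E" using t by simp
        then have "blk E (fst (linv a)) L" using lemF nz by blast
        then show False using nb a_def by simp
      next
        case (Suc j')
        then have "(a # (replicate j' a @ sylp L), linv a # t) \<in> ceq E" using t by simp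
        from levi'[OF symE irr this] show False using irr by auto
      qed
    qed
    show ?case using tred_prep[OF symE irr Suc.IH nt] by simp
  qed
  from this[of "nat \<bar>n\<bar>"] show ?case unfolding vn a_def by (simp add: gpow_def)
qed

end


declare upt_Suc[simp del]

lemma blk_Nil[simp]: "\<not> blk E v []"
  unfolding blk_def by simp

lemma blk_Cons: "blk E v (y # L) \<longleftrightarrow> fst y = v \<or> ((fst y, v) \<in> E \<and> blk E v L)"
proof
  assume "blk E v (y # L)"
  then obtain A z B where h: "y # L = A @ z # B" "fst z = v" "\<forall>z\<in>set A. (fst z, v) \<in> E"
    unfolding blk_def by blast
  show "fst y = v \<or> ((fst y, v) \<in> E \<and> blk E v L)"
  proof (cases A)
    case Nil then show ?thesis using h by simp
  next
    case (Cons a A')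
    then have L: "L = A' @ z # B" and yv: "(fst y, v) \<in> E" using h by auto
    have "blk E v L" unfolding blk_def using L h Cons by (intro exI[of _ A'] exI[of _ z] exI[of _ B]) auto
    then show ?thesis using yv by simp
  qed
next
  assume "fst y = v \<or> ((fst y, v) \<in> E \<and> blk E v L)"
  then show "blk E v (y # L)"
  proof
    assume "fst y = v"
    then show ?thesis unfolding blk_def by (intro exI[of _ "[]"] exI[of _ y] exI[of _ L]) auto
  next
    assume "(fst y, v) \<in> E \<and> blk E v L"
    then obtain A z B where "L = A @ z # B" "fst z = v" "\<forall>z\<in>set A. (fst z, v) \<in> E" "(fst y, v) \<in> E"
      unfolding blk_def by blast
    then show ?thesis unfolding blk_def by (intro exI[of _ "y # A"] exI[of _ z] exI[of _ B]) auto
  qed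
qed

lemma blk_map: "(\<And>x. fst (g x) = fst x) \<Longrightarrow> blk E v (map g L) = blk E v L"
  by (induction L) (auto simp: blk_Cons)

lemma sred_map: "(\<And>x. fst (g x) = fst x) \<Longrightarrow> sred E (map g L) = sred E L"
  by (induction L) (auto simp: blk_map)

lemma not_sred: "\<not> sred E L \<Longrightarrow>
  \<exists>P x A y B. L = P @ x # A @ y # B \<and> fst y = fst x \<and> (\<forall>z\<in>set A. (fst z, fst x) \<in> E)"
proof (induction L)
  case Nil then show ?case by simp
next
  case (Cons x L)
  show ?case
  proof (cases "sred E L")
    case True
    then have "blk E (fst x) L" using Cons.prems by simp
    then obtain A y B where "L = A @ y # B" "fst y = fst x" "\<forall>z\<in>set A. (fst z, fst x) \<in> E"
      unfolding blk_def by blast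
    then show ?thesis by (intro exI[of _ "[]"] exI[of _ x] exI[of _ A] exI[of _ y] exI[of _ B]) auto
  next
    case False
    then obtain P x' A y B where "L = P @ x' # A @ y # B" "fst y = fst x'" "\<forall>z\<in>set A. (fst z, fst x') \<in> E"
      using Cons.IH by blast
    then show ?thesis by (intro exI[of _ "x # P"] exI[of _ x'] exI[of _ A] exI[of _ y] exI[of _ B]) auto
  qed
qed

definition cnt :: "(('v \<times> nat) \<times> bool) list \<Rightarrow> nat \<Rightarrow> int" where
  "cnt u i = sum_list (map (\<lambda>z. if snd (fst z) = i then sg (snd z) else 0) u)"

lemma cnt_simps[simp]: "cnt [] i = 0" "cnt (a # u) i = (if snd (fst a) = i then sg (snd a) else 0) + cnt u i"
  "cnt (u @ u') i = cnt u i + cnt u' i"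
  unfolding cnt_def by simp_all

lemma cnt_gpow: "cnt (gpow (v, j) k) i = (if i = j then k else 0)"
  unfolding cnt_def gpow_def by (auto simp: sum_list_replicate sg_def)

definition cp :: "'v \<Rightarrow> (nat \<Rightarrow> int) \<Rightarrow> nat list \<Rightarrow> (('v \<times> nat) \<times> bool) list" where
  "cp v c is = concat (map (\<lambda>i. gpow (v, i) (c i)) is)"

lemma cp_simps[simp]: "cp v c [] = []" "cp v c (i # is) = gpow (v, i) (c i) @ cp v c is"
  "cp v c (is @ js) = cp v c is @ cp v c js"
  unfolding cp_def by simp_all

lemma cp_cong: "\<forall>i\<in>set is. c i = d i \<Longrightarrow> cp v c is = cp v d is"
  unfolding cp_def by (induction "is") auto

lemma cp_zero: "\<forall>i\<in>set is. c i = 0 \<Longrightarrow> cp v c is = []"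
  unfolding cp_def by (induction "is") auto

lemma set_cp: "z \<in> set (cp v c is) \<Longrightarrow> \<exists>i\<in>set is. fst z = (v, i)"
  unfolding cp_def using set_gpow by fastforce

lemma cnt_cp: "distinct is \<Longrightarrow> cnt (cp v c is) i = (if i \<in> set is then c i else 0)"
  by (induction "is") (auto simp: cnt_gpow)

lemma upt_split: "1 \<le> i \<Longrightarrow> i \<le> m \<Longrightarrow> [1..<Suc m] = [1..<i] @ i # [Suc i..<Suc m]"
proof -
  assume "1 \<le> i" "i \<le> m"
  then have "[1..<i + (Suc m - i)] = [1..<i] @ [i..<i + (Suc m - i)]" by (intro upt_add_eq_append) simp
  moreover have "i + (Suc m - i) = Suc m" using \<open>i \<le> m\<close> by simp
  moreover have "[i..<Suc m] = i # [Suc i..<Suc m]" using \<open>i \<le> m\<close> by (intro upt_conv_Cons) simp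
  ultimately show ?thesis by simp
qed

lemma gpow_sg: "gpow x (sg e) = [(x, e)]"
  unfolding gpow_def sg_def by auto

locale infl =
  fixes V :: "'v set" and E :: "('v \<times> 'v) set" and m :: nat
  assumes EV: "E \<subseteq> V \<times> V" and symE: "sym E" and irr: "\<forall>v. (v, v) \<notin> E" and m1: "1 \<le> m"
begin

abbreviation "Vm \<equiv> infl_vertices V m"
abbreviation "Em \<equiv> infl_edges V E m"

lemma EmVm: "Em \<subseteq> Vm \<times> Vm"
  unfolding infl_edges_def infl_vertices_def using EV by auto

lemma Em_same: "v \<in> V \<Longrightarrow> i \<in> {1..m} \<Longrightarrow> j \<in> {1..m} \<Longrightarrow> i \<noteq> j \<Longrightarrow> ((v, i), (v, j)) \<in> Em"
  unfolding infl_edges_def by blast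

lemma Em_adj: "(v, w) \<in> E \<Longrightarrow> i \<in> {1..m} \<Longrightarrow> k \<in> {1..m} \<Longrightarrow> ((v, i), (w, k)) \<in> Em"
  unfolding infl_edges_def using irr by blast

lemma Em_cases: "(x, y) \<in> Em \<Longrightarrow>
   (\<exists>v i j. x = (v, i) \<and> y = (v, j) \<and> v \<in> V \<and> i \<in> {1..m} \<and> j \<in> {1..m}) \<or>
   (\<exists>v w i k. x = (v, i) \<and> y = (w, k) \<and> (v, w) \<in> E \<and> i \<in> {1..m} \<and> k \<in> {1..m})"
  unfolding infl_edges_def by blast

lemma Vm_iff[simp]: "(v, i) \<in> Vm \<longleftrightarrow> v \<in> V \<and> i \<in> {1..m}"
  unfolding infl_vertices_def by auto

abbreviation "canon v c \<equiv> cp v c [1..<Suc m]"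

lemma cp_words: "v \<in> V \<Longrightarrow> set is \<subseteq> {1..m} \<Longrightarrow> cp v c is \<in> gg_words Vm"
  by (induction "is") (auto intro: gpow_words)

lemma canon_words: "v \<in> V \<Longrightarrow> canon v c \<in> gg_words Vm"
  by (rule cp_words) auto

lemma set_canon: "z \<in> set (canon v c) \<Longrightarrow> \<exists>i\<in>{1..m}. fst z = (v, i)"
  using set_cp[of z v c "[1..<Suc m]"] by auto

lemma canon_zero: "\<forall>i\<in>{1..m}. c i = 0 \<Longrightarrow> canon v c = []"
  by (rule cp_zero) auto

lemma canon_cong: "\<forall>i\<in>{1..m}. c i = d i \<Longrightarrow> canon v c = canon v d"
  by (rule cp_cong) auto

lemma canon_cons:
  assumes v: "v \<in> V" and i: "i \<in> {1..m}"
  shows "(((v, i), e) # canon v c, canon v (\<lambda>j. (if j = i then sg e else 0) + c j)) \<in> gg_rel Vm Em"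
proof -
  define P where "P = cp v c [1..<i]"
  define Q where "Q = cp v c [Suc i..<Suc m]"
  define c' where "c' = (\<lambda>j. (if j = i then sg e else 0) + c j)"
  have sp: "[1..<Suc m] = [1..<i] @ i # [Suc i..<Suc m]" using upt_split i by auto
  have can: "canon v c = P @ gpow (v, i) (c i) @ Q" unfolding P_def Q_def by (subst sp) simp
  have P': "cp v c' [1..<i] = P" unfolding P_def c'_def by (rule cp_cong) auto
  have Q': "cp v c' [Suc i..<Suc m] = Q" unfolding Q_def c'_def by (rule cp_cong) auto
  have can': "canon v c' = P @ gpow (v, i) (c i + sg e) @ Q"
    by (subst sp, simp only: cp_simps P' Q') (simp add: c'_def add.commute)
  have Pw: "P \<in> gg_words Vm" unfolding P_def using v i by (intro cp_words) auto
  have Qw: "Q \<in> gg_words Vm" unfolding Q_def using v i by (intro cp_words) auto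
  have 1: "([((v, i), e)] @ P, P @ [((v, i), e)]) \<in> gg_rel Vm Em"
  proof (rule rel_comm_lists[OF EmVm])
    show "\<forall>a\<in>set [((v, i), e)]. \<forall>d\<in>set P. (fst a, fst d) \<in> Em"
    proof (intro ballI)
      fix a d assume a: "a \<in> set [((v, i), e)]" and d: "d \<in> set P"
      from set_cp[of d v c "[1..<i]"] d obtain j where j: "j \<in> set [1..<i]" and dj: "fst d = (v, j)"
        unfolding P_def by blast
      have jm: "j \<in> {1..m}" "i \<noteq> j" using j i by auto
      have "((v, i), (v, j)) \<in> Em" by (rule Em_same[OF v i jm(1) jm(2)])
      then show "(fst a, fst d) \<in> Em" using a dj by simp
    qed
    show "[((v, i), e)] \<in> gg_words Vm" using v i by simp
    show "P \<in> gg_words Vm" by (rule Pw)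
  qed
  have 2: "([] @ ((v, i), e) # P @ (gpow (v, i) (c i) @ Q), [] @ P @ ((v, i), e) # (gpow (v, i) (c i) @ Q)) \<in> gg_rel Vm Em"
    using rel_cong[OF EmVm 1, of "[]" "gpow (v, i) (c i) @ Q"] Qw gpow_words[of "(v, i)" Vm] v i by simp
  have 3: "(P @ (((v, i), e) # gpow (v, i) (c i)) @ Q, P @ gpow (v, i) (c i + sg e) @ Q) \<in> gg_rel Vm Em"
    by (rule rel_cong[OF EmVm pow_cons[OF EmVm]]) (use v i Pw Qw in auto)
  show ?thesis using rel_trans[OF EmVm 2[simplified] 3[simplified]] can can' c'_def by simp
qed

lemma clique: "u \<in> gg_words Vm \<Longrightarrow> \<forall>z\<in>set u. fst (fst z) = v \<Longrightarrow> v \<in> V \<Longrightarrow>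
    (u, canon v (cnt u)) \<in> gg_rel Vm Em"
proof (induction u)
  case Nil
  have e: "canon v (cnt []) = []" by (rule canon_zero) simp
  show ?case unfolding e by (rule rel_refl[OF EmVm words_Nil])
next
  case (Cons a u)
  obtain x i e where a: "a = ((x, i), e)" by (metis prod.collapse)
  have x: "x = v" and i: "i \<in> {1..m}" using Cons.prems a by auto
  have 1: "([a] @ u @ [], [a] @ canon v (cnt u) @ []) \<in> gg_rel Vm Em"
    by (rule rel_cong[OF EmVm Cons.IH]) (use Cons.prems in auto)
  have 2: "(a # canon v (cnt u), canon v (\<lambda>j. (if j = i then sg e else 0) + cnt u j)) \<in> gg_rel Vm Em"
    using canon_cons[OF Cons.prems(3) i, of e "cnt u"] a x by simp
  have eq: "(\<lambda>j. (if j = i then sg e else 0) + cnt u j) = cnt (a # u)"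
    by (rule ext) (simp add: a)
  show ?case using rel_trans[OF EmVm 1[simplified append_Cons append_Nil append_Nil2] 2] unfolding eq .
qed

lemma canon_merge: "v \<in> V \<Longrightarrow> (canon v c @ canon v d, canon v (\<lambda>i. c i + d i)) \<in> gg_rel Vm Em"
proof -
  assume v: "v \<in> V"
  have w: "canon v c @ canon v d \<in> gg_words Vm" using canon_words[OF v] by simp
  have s: "\<forall>z\<in>set (canon v c @ canon v d). fst (fst z) = v" using set_canon by fastforce
  have "canon v (cnt (canon v c @ canon v d)) = canon v (\<lambda>i. c i + d i)"
    by (rule canon_cong) (simp add: cnt_cp)
  then show ?thesis using clique[OF w s v] by simp
qed

lemma canon_single: "i \<in> {1..m} \<Longrightarrow> canon v (\<lambda>j. if j = i then sg e else 0) = [((v, i), e)]"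
proof -
  assume i: "i \<in> {1..m}"
  have sp: "[1..<Suc m] = [1..<i] @ i # [Suc i..<Suc m]" using upt_split i by auto
  show ?thesis by (subst sp) (simp add: cp_zero gpow_sg)
qed

end


declare upt_Suc[simp del]

context infl
begin

definition sylm :: "('v \<times> (nat \<Rightarrow> int)) list \<Rightarrow> (('v \<times> nat) \<times> bool) list" where
  "sylm L = concat (map (\<lambda>(v, c). canon v c) L)"

lemma sylm_simps[simp]: "sylm [] = []" "sylm ((v, c) # L) = canon v c @ sylm L"
  "sylm (L @ L') = sylm L @ sylm L'"
  unfolding sylm_def by simp_all

definition valid :: "('v \<times> (nat \<Rightarrow> int)) list \<Rightarrow> bool" where
  "valid L \<longleftrightarrow> (\<forall>(v, c)\<in>set L. v \<in> V \<and> (\<exists>i\<in>{1..m}. c i \<noteq> 0))"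

lemma sylm_words: "\<forall>(v, c)\<in>set L. v \<in> V \<Longrightarrow> sylm L \<in> gg_words Vm"
proof (induction L)
  case Nil then show ?case by simp
next
  case (Cons vc L)
  obtain v c where vc: "vc = (v, c)" by (cases vc)
  have "v \<in> V" using Cons.prems vc by auto
  then have "canon v c \<in> gg_words Vm" by (rule canon_words)
  moreover have "sylm L \<in> gg_words Vm" using Cons by auto
  ultimately show ?case using vc by simp
qed

lemma set_sylm: "z \<in> set (sylm L) \<Longrightarrow> \<exists>v c i. (v, c) \<in> set L \<and> i \<in> {1..m} \<and> fst z = (v, i)"
proof (induction L)
  case Nil then show ?case by simp
next
  case (Cons vc L)
  obtain v c where vc: "vc = (v, c)" by (cases vc)
  have "z \<in> set (canon v c) \<or> z \<in> set (sylm L)" using Cons.prems vc by simp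
  then show ?case
  proof
    assume "z \<in> set (canon v c)"
    from set_canon[OF this] obtain i where "i \<in> {1..m}" "fst z = (v, i)" by blast
    then show ?thesis using vc by (intro exI[of _ v] exI[of _ c] exI[of _ i]) simp
  next
    assume "z \<in> set (sylm L)"
    from Cons.IH[OF this] obtain v' c' i where "(v', c') \<in> set L" "i \<in> {1..m}" "fst z = (v', i)"
      by blast
    then show ?thesis by (intro exI[of _ v'] exI[of _ c'] exI[of _ i]) simp
  qed
qed

lemma exist0: "w \<in> gg_words Vm \<Longrightarrow> \<exists>L. valid L \<and> (sylm L, w) \<in> gg_rel Vm Em"
proof -
  assume w: "w \<in> gg_words Vm"
  define f where "f = (\<lambda>((v :: 'v, i :: nat), e :: bool). (v, \<lambda>j. if j = i then sg e else 0))"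
  have "sylm (map f u) = u \<and> valid (map f u)" if "u \<in> gg_words Vm" for u
    using that
  proof (induction u)
    case Nil then show ?case by (simp add: valid_def)
  next
    case (Cons z u)
    obtain v i e where z: "z = ((v, i), e)" by (metis prod.collapse)
    have vi: "v \<in> V" "i \<in> {1..m}" using Cons.prems z by auto
    have fz: "f z = (v, \<lambda>j. if j = i then sg e else 0)" by (simp add: f_def z)
    have "sylm (map f (z # u)) = [((v, i), e)] @ sylm (map f u)"
      using canon_single[OF vi(2), of v e] by (simp only: list.map fz sylm_simps)
    moreover have "sg e \<noteq> 0" by (simp add: sg_def)
    ultimately show ?case using Cons vi by (auto simp: valid_def f_def z)
  qed
  then show ?thesis using w rel_refl[OF EmVm w] by metis
qed

lemma exist: "w \<in> gg_words Vm \<Longrightarrow> \<exists>L. valid L \<and> sred E L \<and> (sylm L, w) \<in> gg_rel Vm Em"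
proof -
  assume w: "w \<in> gg_words Vm"
  define Pr where "Pr L \<longleftrightarrow> valid L \<and> (sylm L, w) \<in> gg_rel Vm Em" for L
  obtain L0 where "Pr L0" using exist0[OF w] Pr_def by blast
  then obtain L where PL: "Pr L" and min: "\<And>L'. Pr L' \<Longrightarrow> length L \<le> length L'"
    using ex_has_least_nat[of Pr L0 length] by blast
  have "sred E L"
  proof (rule ccontr)
    assume "\<not> sred E L"
    then obtain P x A y B where L: "L = P @ x # A @ y # B" and xy: "fst y = fst x"
      and adj: "\<forall>z\<in>set A. (fst z, fst x) \<in> E"
      using not_sred by blast
    obtain v c where x: "x = (v, c)" by (cases x)
    obtain d where y: "y = (v, d)" using xy x by (cases y) auto
    have val: "valid L" and rw: "(sylm L, w) \<in> gg_rel Vm Em" using PL Pr_def by auto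
    have vV: "v \<in> V" using val L x unfolding valid_def by auto
    have valP: "\<forall>(v, c)\<in>set P. v \<in> V" and valA: "\<forall>(v, c)\<in>set A. v \<in> V"
      and valB: "\<forall>(v, c)\<in>set B. v \<in> V" using val L unfolding valid_def by auto
    have wP: "sylm P \<in> gg_words Vm" and wA: "sylm A \<in> gg_words Vm" and wB: "sylm B \<in> gg_words Vm"
      using sylm_words valP valA valB by auto
    have wc: "canon v c \<in> gg_words Vm" and wd: "canon v d \<in> gg_words Vm" using canon_words vV by auto
    have r1: "(sylm A @ canon v d, canon v d @ sylm A) \<in> gg_rel Vm Em"
    proof (rule rel_comm_lists[OF EmVm _ wA wd], intro ballI)
      fix z z' assume z: "z \<in> set (sylm A)" and z': "z' \<in> set (canon v d)"
      from set_sylm[OF z] obtain u c' j where "(u, c') \<in> set A" "j \<in> {1..m}" "fst z = (u, j)" by blast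
      moreover from set_canon[OF z'] obtain i where "i \<in> {1..m}" "fst z' = (v, i)" by blast
      moreover have "(u, v) \<in> E" using adj calculation(1) x by fastforce
      ultimately show "(fst z, fst z') \<in> Em" using Em_adj by auto
    qed
    have r2: "((sylm P @ canon v c) @ (sylm A @ canon v d) @ sylm B,
               (sylm P @ canon v c) @ (canon v d @ sylm A) @ sylm B) \<in> gg_rel Vm Em"
      by (rule rel_cong[OF EmVm r1]) (use wP wc wB in auto)
    have r3: "(sylm P @ (canon v c @ canon v d) @ (sylm A @ sylm B),
               sylm P @ canon v (\<lambda>i. c i + d i) @ (sylm A @ sylm B)) \<in> gg_rel Vm Em"
      by (rule rel_cong[OF EmVm canon_merge[OF vV]]) (use wP wA wB in auto)
    have "(sylm L, sylm P @ canon v (\<lambda>i. c i + d i) @ sylm A @ sylm B) \<in> gg_rel Vm Em"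
      using rel_trans[OF EmVm r2[simplified] r3[simplified]] L x y by simp
    then have new: "(sylm P @ canon v (\<lambda>i. c i + d i) @ sylm A @ sylm B, w) \<in> gg_rel Vm Em"
      using rel_trans[OF EmVm rel_sym[OF EmVm] rw] by blast
    show False
    proof (cases "\<exists>i\<in>{1..m}. c i + d i \<noteq> 0")
      case True
      define L' where "L' = P @ (v, \<lambda>i. c i + d i) # A @ B"
      have "valid L'" using val True vV unfolding valid_def L'_def L by auto
      moreover have "sylm L' = sylm P @ canon v (\<lambda>i. c i + d i) @ sylm A @ sylm B"
        unfolding L'_def by simp
      ultimately have "Pr L'" using new Pr_def by simp
      moreover have "length L' < length L" unfolding L'_def L by simp
      ultimately show False using min by fastforce
    next
      case False
      define L' where "L' = P @ A @ B"
      have z: "canon v (\<lambda>i. c i + d i) = []" using False canon_zero by auto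
      have "valid L'" using val unfolding valid_def L'_def L by auto
      moreover have "sylm L' = sylm P @ canon v (\<lambda>i. c i + d i) @ sylm A @ sylm B"
        unfolding L'_def z by simp
      ultimately have "Pr L'" using new Pr_def by simp
      moreover have "length L' < length L" unfolding L'_def L by simp
      ultimately show False using min by fastforce
    qed
  qed
  then show ?thesis using PL Pr_def by blast
qed

end


declare upt_Suc[simp del]

definition nsum :: "nat \<Rightarrow> (nat \<Rightarrow> int) \<Rightarrow> nat list \<Rightarrow> int" where
  "nsum N c is = sum_list (map (\<lambda>i. c i * int N ^ i) is)"

lemma nsum_simps[simp]: "nsum N c [] = 0" "nsum N c (i # is) = c i * int N ^ i + nsum N c is"
  "nsum N c (is @ js) = nsum N c is + nsum N c js"
  unfolding nsum_def by simp_all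

lemma digit_bound: "1 \<le> N \<Longrightarrow> \<forall>i\<in>{1..k}. \<bar>c i\<bar> < int N \<Longrightarrow> \<bar>nsum N c [1..<Suc k]\<bar> < int N ^ Suc k"
proof (induction k)
  case 0 then show ?case by (simp add: upt_rec)
next
  case (Suc k)
  have sp: "[1..<Suc (Suc k)] = [1..<Suc k] @ [Suc k]" by (rule upt_Suc_append) simp
  have ih: "\<bar>nsum N c [1..<Suc k]\<bar> < int N ^ Suc k" using Suc by auto
  have ck: "\<bar>c (Suc k)\<bar> \<le> int N - 1" using Suc.prems(2) by auto
  have "\<bar>c (Suc k) * int N ^ Suc k\<bar> = \<bar>c (Suc k)\<bar> * int N ^ Suc k" by (simp add: abs_mult)
  also have "\<dots> \<le> (int N - 1) * int N ^ Suc k" by (rule mult_right_mono[OF ck]) simp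
  finally have "\<bar>c (Suc k) * int N ^ Suc k\<bar> \<le> (int N - 1) * int N ^ Suc k" .
  then have "\<bar>nsum N c [1..<Suc k] + c (Suc k) * int N ^ Suc k\<bar> < int N ^ Suc k + (int N - 1) * int N ^ Suc k"
    using ih by linarith
  also have "\<dots> = int N ^ Suc (Suc k)" by (simp add: algebra_simps)
  finally show ?case using sp by simp
qed

lemma digit_nonzero: "1 \<le> N \<Longrightarrow> \<forall>i\<in>{1..k}. \<bar>c i\<bar> < int N \<Longrightarrow> \<exists>i\<in>{1..k}. c i \<noteq> 0 \<Longrightarrow>
    nsum N c [1..<Suc k] \<noteq> 0"
proof (induction k)
  case 0 then show ?case by simp
next
  case (Suc k)
  have sp: "[1..<Suc (Suc k)] = [1..<Suc k] @ [Suc k]" by (rule upt_Suc_append) simp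
  show ?case
  proof (cases "c (Suc k) = 0")
    case True
    then have "\<exists>i\<in>{1..k}. c i \<noteq> 0" using Suc.prems(3) by (auto simp: le_Suc_eq)
    then have "nsum N c [1..<Suc k] \<noteq> 0" using Suc by auto
    then show ?thesis using sp True by simp
  next
    case False
    have ih: "\<bar>nsum N c [1..<Suc k]\<bar> < int N ^ Suc k" using digit_bound Suc.prems by auto
    have c1: "1 \<le> \<bar>c (Suc k)\<bar>" using False by simp
    have "1 * int N ^ Suc k \<le> \<bar>c (Suc k)\<bar> * int N ^ Suc k" by (rule mult_right_mono[OF c1]) simp
    then have "int N ^ Suc k \<le> \<bar>c (Suc k)\<bar> * int N ^ Suc k" by simp
    then have "int N ^ Suc k \<le> \<bar>c (Suc k) * int N ^ Suc k\<bar>" by (simp add: abs_mult)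
    then show ?thesis using sp ih by auto
  qed
qed

context infl
begin

definition sN :: "nat \<Rightarrow> ('v \<times> nat) \<times> bool \<Rightarrow> ('v \<times> bool) list" where
  "sN N = (\<lambda>((v, i), e). gpow v (sg e * int N ^ i))"

definition srho :: "('v \<times> nat) \<times> bool \<Rightarrow> ('v \<times> bool) list" where
  "srho = (\<lambda>((v, i), e). [(v, e)])"

definition siota :: "'v \<times> bool \<Rightarrow> (('v \<times> nat) \<times> bool) list" where
  "siota = (\<lambda>(v, e). [((v, 1), e)])"

lemma sg_not: "sg (\<not> e) = - sg e" unfolding sg_def by simp

lemma gsub_N: "gsub Vm Em V E (sN N)"
proof (unfold_locales)
  show "Em \<subseteq> Vm \<times> Vm" by (rule EmVm)
  show "E \<subseteq> V \<times> V" by (rule EV)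
next
  fix a :: "('v \<times> nat) \<times> bool" assume a: "fst a \<in> Vm"
  obtain v i e where a': "a = ((v, i), e)" by (metis prod.collapse)
  have v: "v \<in> V" using a a' by simp
  show "sN N a \<in> gg_words V" unfolding sN_def a' using gpow_words[OF v] by simp
  have "(sN N a @ sN N (linv a), gpow v (sg e * int N ^ i + sg (\<not> e) * int N ^ i)) \<in> gg_rel V E"
    unfolding sN_def a' using pow_app[OF EV v] by simp
  then show "(sN N a @ sN N (linv a), []) \<in> gg_rel V E" by (simp add: sg_not)
next
  fix a b :: "('v \<times> nat) \<times> bool" assume ab: "(fst a, fst b) \<in> Em"
  obtain x e where a': "a = (x, e)" by (metis prod.collapse)
  obtain y d where b': "b = (y, d)" by (metis prod.collapse)
  from Em_cases[OF ab[unfolded a' b', simplified]]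
  show "(sN N a @ sN N b, sN N b @ sN N a) \<in> gg_rel V E"
  proof (elim disjE exE conjE)
    fix v i j assume xy: "x = (v, i)" "y = (v, j)" and v: "v \<in> V"
    define k where "k = sg e * int N ^ i"
    define l where "l = sg d * int N ^ j"
    have 1: "(gpow v k @ gpow v l, gpow v (k + l)) \<in> gg_rel V E" using pow_app[OF EV v] .
    have 2: "(gpow v l @ gpow v k, gpow v (l + k)) \<in> gg_rel V E" using pow_app[OF EV v] .
    have "gpow v (k + l) = gpow v (l + k)" by (simp add: add.commute)
    then have "(gpow v k @ gpow v l, gpow v l @ gpow v k) \<in> gg_rel V E"
      using rel_trans[OF EV 1] rel_sym[OF EV 2] by simp
    then show ?thesis unfolding sN_def a' b' xy k_def l_def by simp
  next
    fix v w i k assume xy: "x = (v, i)" "y = (w, k)" and vw: "(v, w) \<in> E"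
    have vV: "v \<in> V" "w \<in> V" using vw EV by auto
    have "(gpow v (sg e * int N ^ i) @ gpow w (sg d * int N ^ k), gpow w (sg d * int N ^ k) @ gpow v (sg e * int N ^ i)) \<in> gg_rel V E"
      by (rule rel_comm_lists[OF EV]) (auto simp: set_gpow gpow_words vV vw dest!: set_gpow)
    then show ?thesis unfolding sN_def a' b' xy by simp
  qed
qed

lemma gsub_rho: "gsub Vm Em V E srho"
proof (unfold_locales)
  show "Em \<subseteq> Vm \<times> Vm" by (rule EmVm)
  show "E \<subseteq> V \<times> V" by (rule EV)
next
  fix a :: "('v \<times> nat) \<times> bool" assume a: "fst a \<in> Vm"
  obtain v i e where a': "a = ((v, i), e)" by (metis prod.collapse)
  have v: "v \<in> V" using a a' by simp
  show "srho a \<in> gg_words V" unfolding srho_def a' using v by simp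
  show "(srho a @ srho (linv a), []) \<in> gg_rel V E" unfolding srho_def a' using rel_cancel[OF EV v] by simp
next
  fix a b :: "('v \<times> nat) \<times> bool" assume ab: "(fst a, fst b) \<in> Em"
  obtain x e where a': "a = (x, e)" by (metis prod.collapse)
  obtain y d where b': "b = (y, d)" by (metis prod.collapse)
  from Em_cases[OF ab[unfolded a' b', simplified]]
  show "(srho a @ srho b, srho b @ srho a) \<in> gg_rel V E"
  proof (elim disjE exE conjE)
    fix v i j assume xy: "x = (v, i)" "y = (v, j)" and v: "v \<in> V"
    have "([(v, e), (v, d)], [(v, d), (v, e)]) \<in> gg_rel V E"
    proof (cases "d = e")
      case True then show ?thesis using rel_refl[OF EV] v by simp
    next
      case False
      then have "d = (\<not> e)" by auto
      then show ?thesis using rel_trans[OF EV rel_cancel[OF EV v, of e] rel_sym[OF EV rel_cancel[OF EV v, of d]]]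
        by simp
    qed
    then show ?thesis unfolding srho_def a' b' xy by simp
  next
    fix v w i k assume xy: "x = (v, i)" "y = (w, k)" and vw: "(v, w) \<in> E"
    show ?thesis unfolding srho_def a' b' xy using rel_comm[OF EV vw] by simp
  qed
qed

lemma gsub_iota: "gsub V E Vm Em siota"
proof (unfold_locales)
  show "Em \<subseteq> Vm \<times> Vm" by (rule EmVm)
  show "E \<subseteq> V \<times> V" by (rule EV)
next
  fix a :: "'v \<times> bool" assume a: "fst a \<in> V"
  obtain v e where a': "a = (v, e)" by (metis prod.collapse)
  have v: "(v, 1) \<in> Vm" using a a' m1 by simp
  show "siota a \<in> gg_words Vm" unfolding siota_def a' using v by simp
  show "(siota a @ siota (linv a), []) \<in> gg_rel Vm Em" unfolding siota_def a' using rel_cancel[OF EmVm v] by simp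
next
  fix a b :: "'v \<times> bool" assume ab: "(fst a, fst b) \<in> E"
  obtain v e where a': "a = (v, e)" by (metis prod.collapse)
  obtain w d where b': "b = (w, d)" by (metis prod.collapse)
  have "((v, 1), (w, 1)) \<in> Em" using ab a' b' m1 by (intro Em_adj) auto
  then show "(siota a @ siota b, siota b @ siota a) \<in> gg_rel Vm Em"
    unfolding siota_def a' b' using rel_comm[OF EmVm] by simp
qed

lemma rho_iota: "subw srho (subw siota x) = x"
  by (induction x) (auto simp: srho_def siota_def)

end


declare upt_Suc[simp del]

context infl
begin

lemma subw_gpow: "v \<in> V \<Longrightarrow> (subw (sN N) (gpow (v, i) k), gpow v (k * int N ^ i)) \<in> gg_rel V E"
proof (induction "nat \<bar>k\<bar>" arbitrary: k)
  case 0
  then have "k = 0" by simp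
  then show ?case using rel_refl[OF EV words_Nil] by simp
next
  case (Suc n)
  then have k0: "k \<noteq> 0" by auto
  define k' where "k' = k - sg (0 < k)"
  have n: "n = nat \<bar>k'\<bar>" using Suc(2) k0 unfolding k'_def sg_def by auto
  have pk: "gpow (v, i) k = ((v, i), 0 < k) # gpow (v, i) k'" using gpow_unfold[OF k0] k'_def by simp
  define s where "s = sg (0 < k) * int N ^ i"
  have sw: "gpow v s \<in> gg_words V" using gpow_words[OF Suc(3)] .
  have 1: "(gpow v s @ subw (sN N) (gpow (v, i) k'), gpow v s @ gpow v (k' * int N ^ i)) \<in> gg_rel V E"
    by (rule rel_app[OF EV rel_refl[OF EV sw] Suc(1)[OF n Suc(3)]])
  have 2: "(gpow v s @ gpow v (k' * int N ^ i), gpow v (s + k' * int N ^ i)) \<in> gg_rel V E"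
    by (rule pow_app[OF EV Suc(3)])
  have eq: "s + k' * int N ^ i = k * int N ^ i" unfolding s_def k'_def by (simp add: algebra_simps)
  have "subw (sN N) (gpow (v, i) k) = gpow v s @ subw (sN N) (gpow (v, i) k')"
    unfolding pk s_def by (simp add: sN_def)
  then show ?case using rel_trans[OF EV 1 2] eq by simp
qed

lemma subw_cp: "v \<in> V \<Longrightarrow> (subw (sN N) (cp v c is), gpow v (nsum N c is)) \<in> gg_rel V E"
proof (induction "is")
  case Nil then show ?case using rel_refl[OF EV words_Nil] by simp
next
  case (Cons i "is")
  have 1: "(subw (sN N) (gpow (v, i) (c i)) @ subw (sN N) (cp v c is),
            gpow v (c i * int N ^ i) @ gpow v (nsum N c is)) \<in> gg_rel V E"
    by (rule rel_app[OF EV subw_gpow[OF Cons.prems] Cons.IH[OF Cons.prems]])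
  have 2: "(gpow v (c i * int N ^ i) @ gpow v (nsum N c is), gpow v (c i * int N ^ i + nsum N c is)) \<in> gg_rel V E"
    by (rule pow_app[OF EV Cons.prems])
  show ?case using rel_trans[OF EV 1 2] by simp
qed

definition LN :: "nat \<Rightarrow> ('v \<times> (nat \<Rightarrow> int)) list \<Rightarrow> ('v \<times> int) list" where
  "LN N L = map (\<lambda>(v, c). (v, nsum N c [1..<Suc m])) L"

lemma subw_sylm: "\<forall>(v, c)\<in>set L. v \<in> V \<Longrightarrow> (subw (sN N) (sylm L), sylp (LN N L)) \<in> gg_rel V E"
proof (induction L)
  case Nil then show ?case using rel_refl[OF EV words_Nil] by (simp add: LN_def)
next
  case (Cons vc L)
  obtain v c where vc: "vc = (v, c)" by (cases vc)
  have v: "v \<in> V" using Cons.prems vc by auto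
  have "(subw (sN N) (canon v c) @ subw (sN N) (sylm L), gpow v (nsum N c [1..<Suc m]) @ sylp (LN N L)) \<in> gg_rel V E"
    by (rule rel_app[OF EV subw_cp[OF v] Cons.IH]) (use Cons.prems in auto)
  then show ?case using vc by (simp add: LN_def)
qed

abbreviation "G \<equiv> graph_group V E"
abbreviation "Gm \<equiv> graph_group Vm Em"

lemma disc1:
  assumes g: "g \<in> carrier Gm" and g1: "g \<noteq> \<one>\<^bsub>Gm\<^esub>"
  shows "\<exists>B. \<forall>N. B < N \<longrightarrow> subh V E (sN N) g \<noteq> \<one>\<^bsub>G\<^esub>"
proof -
  obtain w where w: "w \<in> gg_words Vm" and gw: "g = gg_rel Vm Em `` {w}" using carrier_ggE[OF EmVm g] by blast
  obtain L where val: "valid L" and sr: "sred E L" and Lw: "(sylm L, w) \<in> gg_rel Vm Em" using exist[OF w] by blast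
  have LV: "\<forall>(v, c)\<in>set L. v \<in> V" using val unfolding valid_def by auto
  have Lne: "L \<noteq> []"
  proof
    assume "L = []"
    then have "([], w) \<in> gg_rel Vm Em" using Lw by simp
    then have "g = \<one>\<^bsub>Gm\<^esub>" using gw one_gg[OF EmVm] rel_class_eq[OF EmVm words_Nil] rel_sym[OF EmVm]
      by (metis)
    then show False using g1 by simp
  qed
  define B where "B = nat (sum_list (map (\<lambda>(v, c). \<Sum>i\<in>{1..m}. \<bar>c i\<bar>) L))"
  have bnd: "\<bar>c i\<bar> \<le> int B" if "(v, c) \<in> set L" "i \<in> {1..m}" for v c i
  proof -
    have "\<bar>c i\<bar> \<le> (\<Sum>i\<in>{1..m}. \<bar>c i\<bar>)" by (rule member_le_sum) (use that in auto)
    also have "\<dots> \<le> sum_list (map (\<lambda>(v, c). \<Sum>i\<in>{1..m}. \<bar>c i\<bar>) L)"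
      by (rule member_le_sum_list) (use that in \<open>auto intro!: sum_nonneg\<close>)
    also have "\<dots> \<le> int B" unfolding B_def by simp
    finally show ?thesis .
  qed
  show ?thesis
  proof (intro exI allI impI)
    fix N assume BN: "B < N"
    have N1: "1 \<le> N" using BN by simp
    have nz: "\<forall>(v, n)\<in>set (LN N L). n \<noteq> 0"
    proof
      fix vn assume "vn \<in> set (LN N L)"
      then obtain v c where vc: "(v, c) \<in> set L" and vn: "vn = (v, nsum N c [1..<Suc m])"
        unfolding LN_def by auto
      have "\<forall>i\<in>{1..m}. \<bar>c i\<bar> < int N" using bnd[OF vc] BN by force
      moreover have "\<exists>i\<in>{1..m}. c i \<noteq> 0" using val vc unfolding valid_def by auto
      ultimately show "case vn of (v, n) \<Rightarrow> n \<noteq> 0" using digit_nonzero[OF N1] vn by auto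
    qed
    have srN: "sred E (LN N L)" unfolding LN_def using sr by (subst sred_map) auto
    have tr: "tred E (sylp (LN N L))" by (rule lemS[OF symE irr srN nz])
    have ne: "sylp (LN N L) \<noteq> []"
    proof -
      obtain vc L' where L: "L = vc # L'" using Lne by (cases L) auto
      obtain v c where vc: "vc = (v, c)" by (cases vc)
      have "nsum N c [1..<Suc m] \<noteq> 0" using nz L vc by (auto simp: LN_def)
      then show ?thesis using L vc by (simp add: LN_def gpow_Nil_iff)
    qed
    interpret s: gsub Vm Em V E "sN N" by (rule gsub_N)
    have hg: "subh V E (sN N) g = gg_rel V E `` {subw (sN N) w}" using s.subh_class[OF w] gw by simp
    have r1: "(subw (sN N) w, sylp (LN N L)) \<in> gg_rel V E"
      using rel_trans[OF EV s.sub_rel[OF rel_sym[OF EmVm Lw]] subw_sylm[OF LV]] .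
    show "subh V E (sN N) g \<noteq> \<one>\<^bsub>G\<^esub>"
    proof
      assume "subh V E (sN N) g = \<one>\<^bsub>G\<^esub>"
      then have "gg_rel V E `` {subw (sN N) w} = gg_rel V E `` {[]}" using hg one_gg[OF EV] by simp
      then have "(subw (sN N) w, []) \<in> gg_rel V E"
        using rel_class_eq[OF EV s.subw_words[OF w]] by blast
      then have "(sylp (LN N L), []) \<in> gg_rel V E" using rel_trans[OF EV rel_sym[OF EV r1]] by blast
      then have "(sylp (LN N L), []) \<in> (gsym V E)\<^sup>*" using rel_iff[OF EV] by blast
      then have "sylp (LN N L) = []" by (rule tred_nontrivial[OF symE irr tr])
      then show False using ne by simp
    qed
  qed
qed

end


context infl
begin

lemma disc_fin:
  assumes fS: "finite S" and SG: "S \<subseteq> carrier Gm"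
  shows "\<exists>f. f \<in> hom Gm G \<and> inj_on f S"
proof -
  have gGm: "group Gm" by (rule group_gg[OF EmVm])
  have gG: "group G" by (rule group_gg[OF EV])
  define F where "F = {p \<in> S \<times> S. fst p \<noteq> snd p}"
  have fF: "finite F" unfolding F_def using fS by auto
  define gp where "gp p = fst p \<otimes>\<^bsub>Gm\<^esub> inv\<^bsub>Gm\<^esub> snd p" for p
  have gpc: "gp p \<in> carrier Gm" and gp1: "gp p \<noteq> \<one>\<^bsub>Gm\<^esub>" if "p \<in> F" for p
  proof -
    have c: "fst p \<in> carrier Gm" "snd p \<in> carrier Gm" using that SG unfolding F_def by auto
    have "inv\<^bsub>Gm\<^esub> snd p \<in> carrier Gm" by (rule group.inv_closed[OF gGm c(2)])
    then show "gp p \<in> carrier Gm" unfolding gp_def by (rule monoid.m_closed[OF group.is_monoid[OF gGm] c(1)])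
    show "gp p \<noteq> \<one>\<^bsub>Gm\<^esub>"
    proof
      assume "gp p = \<one>\<^bsub>Gm\<^esub>"
      then have "inv\<^bsub>Gm\<^esub> (inv\<^bsub>Gm\<^esub> snd p) = fst p"
        unfolding gp_def by (intro group.inv_equality[OF gGm]) (use c gGm in \<open>auto simp: group.inv_closed\<close>)
      then have "fst p = snd p" using group.inv_inv[OF gGm c(2)] by simp
      then show False using that unfolding F_def by simp
    qed
  qed
  have "\<forall>p\<in>F. \<exists>B. \<forall>N. B < N \<longrightarrow> subh V E (sN N) (gp p) \<noteq> \<one>\<^bsub>G\<^esub>"
  proof
    fix p assume "p \<in> F"
    show "\<exists>B. \<forall>N. B < N \<longrightarrow> subh V E (sN N) (gp p) \<noteq> \<one>\<^bsub>G\<^esub>"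
      by (rule disc1[OF gpc[OF \<open>p \<in> F\<close>] gp1[OF \<open>p \<in> F\<close>]])
  qed
  from bchoice[OF this] obtain Bf where Bf0: "\<forall>p\<in>F. \<forall>N. Bf p < N \<longrightarrow> subh V E (sN N) (gp p) \<noteq> \<one>\<^bsub>G\<^esub>"
    by blast
  have Bf: "subh V E (sN N) (gp p) \<noteq> \<one>\<^bsub>G\<^esub>" if "p \<in> F" "Bf p < N" for p N
    using Bf0 that by blast
  define N where "N = Suc (\<Sum>p\<in>F. Bf p)"
  have BN: "Bf p < N" if "p \<in> F" for p
  proof -
    have "Bf p \<le> (\<Sum>p\<in>F. Bf p)" by (rule member_le_sum) (use that fF in auto)
    then show ?thesis unfolding N_def by simp
  qed
  interpret s: gsub Vm Em V E "sN N" by (rule gsub_N)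
  have hom: "subh V E (sN N) \<in> hom Gm G" by (rule s.subh_hom)
  have gh: "group_hom Gm G (subh V E (sN N))"
    unfolding group_hom_def group_hom_axioms_def using gGm gG hom by simp
  have "inj_on (subh V E (sN N)) S"
  proof (rule inj_onI, rule ccontr)
    fix X Y assume X: "X \<in> S" and Y: "Y \<in> S" and eq: "subh V E (sN N) X = subh V E (sN N) Y" and ne: "X \<noteq> Y"
    have p: "(X, Y) \<in> F" unfolding F_def using X Y ne by simp
    have cX: "X \<in> carrier Gm" and cY: "Y \<in> carrier Gm" using X Y SG by auto
    have "subh V E (sN N) (gp (X, Y)) = subh V E (sN N) X \<otimes>\<^bsub>G\<^esub> inv\<^bsub>G\<^esub> subh V E (sN N) Y"
      unfolding gp_def using group_hom.hom_mult[OF gh cX] group_hom.hom_inv[OF gh cY] cY gGm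
      by (simp add: group.inv_closed)
    also have "\<dots> = \<one>\<^bsub>G\<^esub>" unfolding eq
      by (rule group.r_inv[OF gG hom_in_carrier[OF hom cY]])
    finally show False using Bf[OF p BN[OF p]] by simp
  qed
  then show ?thesis using hom by blast
qed

lemma iota_inj: "inj_on (subh Vm Em siota) (carrier G)"
proof (rule inj_onI)
  interpret i: gsub V E Vm Em siota by (rule gsub_iota)
  interpret r: gsub Vm Em V E srho by (rule gsub_rho)
  have bk: "subh V E srho (subh Vm Em siota X) = X" if hX: "X \<in> carrier G" for X
  proof -
    obtain x where x: "x \<in> gg_words V" and X: "X = gg_rel V E `` {x}" using carrier_ggE[OF EV hX] by blast
    show ?thesis unfolding X i.subh_class[OF x] r.subh_class[OF i.subw_words[OF x]] rho_iota ..
  qed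
  fix X Y assume "X \<in> carrier G" "Y \<in> carrier G" "subh Vm Em siota X = subh Vm Em siota Y"
  then show "X = Y" using bk by metis
qed

theorem main: "universally_equivalent G Gm"
  unfolding universally_equivalent_def
proof (intro allI iffI)
  fix \<phi> assume "sat_universal G \<phi>"
  then show "sat_universal Gm \<phi>"
    using sat_transfer[OF group_gg[OF EmVm] group_gg[OF EV] disc_fin] by blast
next
  fix \<phi> assume sat: "sat_universal Gm \<phi>"
  interpret i: gsub V E Vm Em siota by (rule gsub_iota)
  show "sat_universal G \<phi>"
  proof (rule sat_transfer[OF group_gg[OF EV] group_gg[OF EmVm] _ sat])
    fix S assume "finite S" "S \<subseteq> carrier G"
    then show "\<exists>f. f \<in> hom G Gm \<and> inj_on f S"
      using i.subh_hom iota_inj inj_on_subset by blast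
  qed
qed

end

theorem proposition4p2:
  fixes V :: "'v set" and E :: "('v \<times> 'v) set" and m :: nat
  assumes "finite V" and "E \<subseteq> V \<times> V" and "sym E" and "\<forall>v. (v, v) \<notin> E"
    and "m \<ge> 1"
  shows "universally_equivalent (graph_group V E)
           (graph_group (infl_vertices V m) (infl_edges V E m))"
proof -
  interpret infl V E m using assms by unfold_locales auto
  show ?thesis by (rule main)
qed


end
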